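(* Let $f$ be such that $f(t)\to0$ as $t\to\infty$ and $f$ is eventually decreasing, and $f\in C^2(0,\infty)$ is convex on $(0,\infty)$ with $f''$ monotone on some interval $(0,\epsilon)$. (a) If moreover $f(0)$ is finite and there exists $\sigma_1\in(0,1)$ with $\lim_{t\to0}t^{\sigma_1}f'(t)=0$, then $\lim_{\omega\to\infty}\omega^{2-\sigma_1}\mathcal F_{\cos}(\omega)=0$ and $\lim_{\omega\to\infty}\omega\mathcal F_{\sin}(\omega)=f(0)$. (b) If moreover $f(0)$ is infinite and there exists $\sigma_2\in(0,1)$ with $\lim_{t\to0}t^{\sigma_2}f(t)\in(0,\infty)$, then $\lim_{\omega\to\infty}\omega^{1-\sigma_2}\mathcal F_{\cos}(\omega)\in(0,\infty)$ and $\lim_{\omega\to\infty}\omega^{1-\sigma_2}\mathcal F_{\sin}(\omega)\in(0,\infty)$.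
   Context: For $\omega\ne0$, $\mathcal F_{\cos}(\omega)=\int_0^\infty f(t)\cos(t\omega)dt$ and $\mathcal F_{\sin}(\omega)=\int_0^\infty f(t)\sin(t\omega)dt$ (improper integrals). Here $f$ is defined on $[0,\infty)$ (extended evenly to $\mathbb{R}$), real-valued on $(0,\infty)$, with $f(0)$ possibly $+\infty$. *)

theory Defs
  imports "HOL-Analysis.Analysis"
begin

definition improper_integral_0_inf :: "(real \<Rightarrow> real) \<Rightarrow> real" where
  "improper_integral_0_inf g =
     Lim (at_right 0 \<times>\<^sub>F at_top) (\<lambda>(a, b). integral {a..b} g)"

definition Fcos :: "(real \<Rightarrow> real) \<Rightarrow> real \<Rightarrow> real" where
  "Fcos f \<omega> = improper_integral_0_inf (\<lambda>t. f t * cos (t * \<omega>))"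

definition Fsin :: "(real \<Rightarrow> real) \<Rightarrow> real \<Rightarrow> real" where
  "Fsin f \<omega> = improper_integral_0_inf (\<lambda>t. f t * sin (t * \<omega>))"

end

theory Submission
  imports Defs "HOL-Real_Asymp.Real_Asymp"
begin

lemma cauchy_conv_real:
  fixes \<phi> :: "'a \<Rightarrow> real"
  assumes F: "F \<noteq> bot"
    and C: "\<And>e. e > 0 \<Longrightarrow> \<exists>P. eventually P F \<and> (\<forall>x y. P x \<longrightarrow> P y \<longrightarrow> \<bar>\<phi> x - \<phi> y\<bar> < e)"
  shows "\<exists>L. (\<phi> \<longlongrightarrow> L) F"
proof -
  have "cauchy_filter (filtermap \<phi> F)"
    unfolding cauchy_filter_metric_filtermap
  proof (intro allI impI)
    fix e :: real assume "e > 0"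
    then obtain P where "eventually P F" "\<forall>x y. P x \<longrightarrow> P y \<longrightarrow> \<bar>\<phi> x - \<phi> y\<bar> < e"
      using C by blast
    then show "\<exists>P. eventually P F \<and> (\<forall>x y. P x \<and> P y \<longrightarrow> dist (\<phi> x) (\<phi> y) < e)"
      by (auto simp: dist_real_def)
  qed
  moreover have "filtermap \<phi> F \<noteq> bot" using F by (simp add: filtermap_bot_iff)
  ultimately obtain c where "filtermap \<phi> F \<le> nhds c"
    using cauchy_filter_complete_converges[of "filtermap \<phi> F" UNIV] complete_UNIV by auto
  then show ?thesis unfolding filterlim_def by blast
qed

lemma filterlim_fst_prod: "filterlim fst A (A \<times>\<^sub>F B)"
  unfolding filterlim_def by (rule filtermap_fst_prod_filter)
lemma filterlim_snd_prod: "filterlim snd B (A \<times>\<^sub>F B)"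
  unfolding filterlim_def by (rule filtermap_snd_prod_filter)

lemma PF_nonbot: "at_right (0::real) \<times>\<^sub>F at_top \<noteq> (bot :: (real\<times>real) filter)"
  by (simp add: prod_filter_eq_bot)

lemma ev_PF:
  fixes d B :: real
  assumes "\<And>a b. 0 < a \<Longrightarrow> a < d \<Longrightarrow> B < b \<Longrightarrow> P (a, b)" "d > 0"
  shows "eventually P (at_right (0::real) \<times>\<^sub>F at_top)"
  unfolding eventually_prod_filter
  apply (rule exI[of _ "\<lambda>a. 0 < a \<and> a < d"], rule exI[of _ "\<lambda>b. B < b"])
  using assms eventually_gt_at_top[of B] by (auto simp: eventually_at_right_field)

lemma L_imp:
  fixes G :: "real \<Rightarrow> real"
  assumes int: "\<And>a b. 0 < a \<Longrightarrow> a \<le> b \<Longrightarrow> G integrable_on {a..b}"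
    and c0: "\<And>e. e > 0 \<Longrightarrow> \<exists>d>0. \<forall>a a'. 0 < a \<longrightarrow> a \<le> a' \<longrightarrow> a' < d \<longrightarrow> \<bar>integral {a..a'} G\<bar> < e"
    and ci: "\<And>e. e > 0 \<Longrightarrow> \<exists>B. \<forall>b b'. B \<le> b \<longrightarrow> b \<le> b' \<longrightarrow> \<bar>integral {b..b'} G\<bar> < e"
  shows "((\<lambda>p. integral {fst p..snd p} G) \<longlongrightarrow> improper_integral_0_inf G) (at_right 0 \<times>\<^sub>F at_top)"
proof -
  define A where "A x = integral {x..1} G" for x
  define B where "B x = integral {1..x} G" for x
  have A1: "\<exists>LA. (A \<longlongrightarrow> LA) (at_right 0)"
  proof (rule cauchy_conv_real)
    fix e :: real assume "e > 0"
    then obtain d where d: "d > 0" "\<forall>a a'. 0 < a \<longrightarrow> a \<le> a' \<longrightarrow> a' < d \<longrightarrow> \<bar>integral {a..a'} G\<bar> < e"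
      using c0 by blast
    have *: "\<bar>A x - A y\<bar> < e" if "0 < x" "x \<le> y" "y < min d 1" for x y
    proof -
      have "integral {x..y} G + integral {y..1} G = integral {x..1} G"
        using that by (intro Henstock_Kurzweil_Integration.integral_combine[OF _ _ int]) auto
      moreover have "\<bar>integral {x..y} G\<bar> < e" using d that by auto
      ultimately show ?thesis unfolding A_def by linarith
    qed
    show "\<exists>P. eventually P (at_right 0) \<and> (\<forall>x y. P x \<longrightarrow> P y \<longrightarrow> \<bar>A x - A y\<bar> < e)"
    proof (rule exI[of _ "\<lambda>x. 0 < x \<and> x < min d 1"], intro conjI allI impI)
      show "eventually (\<lambda>x. 0 < x \<and> x < min d 1) (at_right 0)"
        unfolding eventually_at_right_field using d by (intro exI[of _ "min d 1"]) auto
      fix x y assume "0 < x \<and> x < min d 1" "0 < y \<and> y < min d 1"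
      then show "\<bar>A x - A y\<bar> < e"
        using *[of x y] *[of y x] by (cases "x \<le> y") (auto simp: abs_minus_commute)
    qed
  qed simp
  have B1: "\<exists>LB. (B \<longlongrightarrow> LB) at_top"
  proof (rule cauchy_conv_real)
    fix e :: real assume "e > 0"
    then obtain M where M: "\<forall>b b'. M \<le> b \<longrightarrow> b \<le> b' \<longrightarrow> \<bar>integral {b..b'} G\<bar> < e"
      using ci by blast
    have *: "\<bar>B x - B y\<bar> < e" if "max M 1 \<le> x" "x \<le> y" for x y
    proof -
      have "integral {1..x} G + integral {x..y} G = integral {1..y} G"
        using that by (intro Henstock_Kurzweil_Integration.integral_combine[OF _ _ int]) auto
      moreover have "\<bar>integral {x..y} G\<bar> < e" using M that by auto
      ultimately show ?thesis unfolding B_def by linarith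
    qed
    show "\<exists>P. eventually P at_top \<and> (\<forall>x y. P x \<longrightarrow> P y \<longrightarrow> \<bar>B x - B y\<bar> < e)"
    proof (rule exI[of _ "\<lambda>x. max M 1 \<le> x"], intro conjI allI impI)
      show "eventually (\<lambda>x. max M 1 \<le> x) at_top" by (rule eventually_ge_at_top)
      fix x y assume "max M 1 \<le> x" "max M 1 \<le> y"
      then show "\<bar>B x - B y\<bar> < e"
        using *[of x y] *[of y x] by (cases "x \<le> y") (auto simp: abs_minus_commute)
    qed
  qed simp
  obtain LA LB where LA: "(A \<longlongrightarrow> LA) (at_right 0)" and LB: "(B \<longlongrightarrow> LB) at_top"
    using A1 B1 by blast
  have lim: "((\<lambda>p. A (fst p) + B (snd p)) \<longlongrightarrow> LA + LB) (at_right 0 \<times>\<^sub>F at_top)"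
    by (intro tendsto_add filterlim_compose[OF LA filterlim_fst_prod] filterlim_compose[OF LB filterlim_snd_prod])
  have ev: "eventually (\<lambda>p. A (fst p) + B (snd p) = integral {fst p..snd p} G) (at_right 0 \<times>\<^sub>F at_top)"
  proof (rule ev_PF[where d=1 and B=1])
    fix a b :: real assume ab: "0 < a" "a < 1" "1 < b"
    have "integral {a..1} G + integral {1..b} G = integral {a..b} G"
      using ab by (intro Henstock_Kurzweil_Integration.integral_combine[OF _ _ int]) auto
    then show "A (fst (a, b)) + B (snd (a, b)) = integral {fst (a, b)..snd (a, b)} G"
      by (simp add: A_def B_def)
  qed simp
  have lim2: "((\<lambda>p. integral {fst p..snd p} G) \<longlongrightarrow> LA + LB) (at_right 0 \<times>\<^sub>F at_top)"
    using tendsto_cong[OF ev] lim by blast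
  moreover have "improper_integral_0_inf G = LA + LB"
    unfolding improper_integral_0_inf_def case_prod_unfold
    using tendsto_Lim[OF PF_nonbot lim2] .
  ultimately show ?thesis by simp
qed

lemma L_pass:
  fixes \<phi> \<psi> :: "'a \<Rightarrow> real"
  assumes "F \<noteq> bot" "(\<phi> \<longlongrightarrow> L) F" "(\<psi> \<longlongrightarrow> M) F" "eventually (\<lambda>x. \<bar>\<phi> x - c\<bar> \<le> \<psi> x) F"
  shows "\<bar>L - c\<bar> \<le> M"
proof -
  have "((\<lambda>x. \<bar>\<phi> x - c\<bar>) \<longlongrightarrow> \<bar>L - c\<bar>) F" by (intro tendsto_intros assms)
  then show ?thesis using tendsto_le[OF assms(1) assms(3)] assms(4) by blast
qed

lemma FTC_real:
  fixes F F' :: "real \<Rightarrow> real"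
  assumes "a \<le> b" "\<And>x. x \<in> {a..b} \<Longrightarrow> (F has_real_derivative F' x) (at x)"
  shows "(F' has_integral F b - F a) {a..b}"
  apply (rule fundamental_theorem_of_calculus[OF assms(1)])
  using assms(2) by (auto simp: has_real_derivative_iff_has_vector_derivative[symmetric] intro: has_field_derivative_at_within)

lemma powr_tends0: "p > 0 \<Longrightarrow> ((\<lambda>x::real. C * x powr p) \<longlongrightarrow> 0) (at_right 0)"
  by real_asymp

lemma powr_int:
  fixes \<sigma> :: real
  assumes "0 < a" "a \<le> c" "0 < \<sigma>" "\<sigma> < 1"
  shows "((\<lambda>t. t powr -\<sigma>) has_integral (c powr (1-\<sigma>) - a powr (1-\<sigma>)) / (1-\<sigma>)) {a..c}"
proof -
  have "((\<lambda>t. t powr (1-\<sigma>) / (1-\<sigma>)) has_real_derivative t powr -\<sigma>) (at t)" if "t > 0" for t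
    using has_real_derivative_powr[OF that, of "1-\<sigma>"] assms that
    by (auto intro!: derivative_eq_intros)
  from FTC_real[OF assms(2), of "\<lambda>t. t powr (1-\<sigma>) / (1-\<sigma>)", OF this]
  show ?thesis using assms by (simp add: diff_divide_distrib)
qed

lemma powr_int_le:
  fixes \<sigma> :: real
  assumes "0 < a" "a \<le> c" "0 < \<sigma>" "\<sigma> < 1"
  shows "(\<lambda>t. t powr -\<sigma>) integrable_on {a..c}" "integral {a..c} (\<lambda>t. t powr -\<sigma>) \<le> c powr (1-\<sigma>) / (1-\<sigma>)"
  using powr_int[OF assms] assms
  by (auto simp: integral_unique has_integral_integrable divide_right_mono)

lemma L_bonnet:
  fixes h g :: "real \<Rightarrow> real"
  assumes gi: "g integrable_on {a..b}" and ab: "a \<le> b"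
    and gb: "\<And>c d. a \<le> c \<Longrightarrow> c \<le> d \<Longrightarrow> d \<le> b \<Longrightarrow> \<bar>integral {c..d} g\<bar> \<le> M"
    and anti: "\<And>x y. a \<le> x \<Longrightarrow> x \<le> y \<Longrightarrow> y \<le> b \<Longrightarrow> h y \<le> h x"
    and nn: "h b \<ge> 0"
  shows "(\<lambda>x. h x * g x) integrable_on {a..b}"
    "\<bar>integral {a..b} (\<lambda>x. h x * g x)\<bar> \<le> 2 * h a * M"
proof -
  obtain c where c: "c \<in> {a..b}"
    and hi: "((\<lambda>x. - h x * g x) has_integral (- h a * integral {a..c} g + - h b * integral {c..b} g)) {a..b}"
    using second_mean_value_theorem_full[OF gi ab, of "\<lambda>x. - h x"] anti by force
  have hi2: "((\<lambda>x. h x * g x) has_integral (h a * integral {a..c} g + h b * integral {c..b} g)) {a..b}"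
    using has_integral_neg[OF hi] by (simp add: add.commute)
  then show "(\<lambda>x. h x * g x) integrable_on {a..b}" by blast
  have M0: "0 \<le> M" using gb[of a a] ab by simp
  have ha: "h b \<le> h a" using anti ab by simp
  have "\<bar>h a * integral {a..c} g\<bar> \<le> h a * M"
    using gb[of a c] c nn ha by (auto simp: abs_mult intro!: mult_left_mono)
  moreover have "\<bar>h b * integral {c..b} g\<bar> \<le> h b * M"
    using gb[of c b] c nn by (auto simp: abs_mult intro!: mult_left_mono)
  moreover have "h b * M \<le> h a * M" using ha M0 by (simp add: mult_right_mono)
  ultimately show "\<bar>integral {a..b} (\<lambda>x. h x * g x)\<bar> \<le> 2 * h a * M"
    using integral_unique[OF hi2] by linarith
qed

lemma osc_cos:
  fixes w :: real assumes "w > 0"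
  shows "continuous_on UNIV (\<lambda>t. cos (t * w))" "\<And>x. \<bar>cos (x * w)\<bar> \<le> 1"
    "\<And>c d. c \<le> d \<Longrightarrow> \<bar>integral {c..d} (\<lambda>t. cos (t * w))\<bar> \<le> 2 / w"
proof -
  show "continuous_on UNIV (\<lambda>t. cos (t * w))" by (intro continuous_intros)
  show "\<bar>cos (x * w)\<bar> \<le> 1" for x by simp
  fix c d :: real assume "c \<le> d"
  have "((\<lambda>t. cos (t * w)) has_integral (sin (d * w) / w - sin (c * w) / w)) {c..d}"
    using assms by (intro FTC_real[OF \<open>c \<le> d\<close>]) (auto intro!: derivative_eq_intros)
  then have "integral {c..d} (\<lambda>t. cos (t * w)) = (sin (d * w) - sin (c * w)) / w"
    by (simp add: integral_unique diff_divide_distrib)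
  moreover have "\<bar>sin (d * w) - sin (c * w)\<bar> \<le> 2"
    using abs_sin_le_one[of "d*w"] abs_sin_le_one[of "c*w"] by linarith
  ultimately show "\<bar>integral {c..d} (\<lambda>t. cos (t * w))\<bar> \<le> 2 / w"
    using assms by (simp add: abs_div divide_right_mono)
qed

lemma osc_sin:
  fixes w :: real assumes "w > 0"
  shows "continuous_on UNIV (\<lambda>t. sin (t * w))" "\<And>x. \<bar>sin (x * w)\<bar> \<le> 1"
    "\<And>c d. c \<le> d \<Longrightarrow> \<bar>integral {c..d} (\<lambda>t. sin (t * w))\<bar> \<le> 2 / w"
proof -
  show "continuous_on UNIV (\<lambda>t. sin (t * w))" by (intro continuous_intros)
  show "\<bar>sin (x * w)\<bar> \<le> 1" for x by simp
  fix c d :: real assume "c \<le> d"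
  have "((\<lambda>t. sin (t * w)) has_integral (- cos (d * w) / w - - cos (c * w) / w)) {c..d}"
    using assms by (intro FTC_real[OF \<open>c \<le> d\<close>]) (auto intro!: derivative_eq_intros)
  then have "integral {c..d} (\<lambda>t. sin (t * w)) = (cos (c * w) - cos (d * w)) / w"
    by (simp add: integral_unique diff_divide_distrib)
  moreover have "\<bar>cos (c * w) - cos (d * w)\<bar> \<le> 2"
    using abs_cos_le_one[of "d*w"] abs_cos_le_one[of "c*w"] by linarith
  ultimately show "\<bar>integral {c..d} (\<lambda>t. sin (t * w))\<bar> \<le> 2 / w"
    using assms by (simp add: abs_div divide_right_mono)
qed

lemma L_exist:
  fixes h g :: "real \<Rightarrow> real"
  assumes w: "w > 0"
    and gc: "continuous_on UNIV g" and g1: "\<And>x. \<bar>g x\<bar> \<le> 1"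
    and gI: "\<And>c d. c \<le> d \<Longrightarrow> \<bar>integral {c..d} g\<bar> \<le> 2 / w"
    and hc: "continuous_on {0<..} h"
    and anti: "\<And>x y. 0 < x \<Longrightarrow> x \<le> y \<Longrightarrow> h y \<le> h x"
    and nn: "\<And>x. 0 < x \<Longrightarrow> 0 \<le> h x"
    and lim: "(h \<longlongrightarrow> 0) at_top"
    and near: "\<exists>d0>0. \<exists>C p. p > 0 \<and> (\<forall>a a'. 0 < a \<longrightarrow> a \<le> a' \<longrightarrow> a' < d0 \<longrightarrow> integral {a..a'} h \<le> C * a' powr p)"
  shows "((\<lambda>p. integral {fst p..snd p} (\<lambda>t. h t * g t)) \<longlongrightarrow> improper_integral_0_inf (\<lambda>t. h t * g t)) (at_right 0 \<times>\<^sub>F at_top)"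
proof (rule L_imp)
  have hint: "h integrable_on {a..b}" if "0 < a" "a \<le> b" for a b
    using that by (intro integrable_continuous_real continuous_on_subset[OF hc]) auto
  show int: "(\<lambda>t. h t * g t) integrable_on {a..b}" if "0 < a" "a \<le> b" for a b
    using that by (intro integrable_continuous_real continuous_intros continuous_on_subset[OF hc]
        continuous_on_subset[OF gc]) auto
  fix e :: real assume e: "e > 0"
  obtain d0 C p where d0: "d0 > 0" "p > 0"
    and dC: "\<And>a a'. 0 < a \<Longrightarrow> a \<le> a' \<Longrightarrow> a' < d0 \<Longrightarrow> integral {a..a'} h \<le> C * a' powr p"
    using near by blast
  have "eventually (\<lambda>x. C * x powr p < e) (at_right 0)"
    using order_tendstoD(2)[OF powr_tends0[OF d0(2), of C] e] .
  then obtain d1 where d1: "d1 > 0" "\<And>x. 0 < x \<Longrightarrow> x < d1 \<Longrightarrow> C * x powr p < e"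
    by (auto simp: eventually_at_right_field)
  show "\<exists>d>0. \<forall>a a'. 0 < a \<longrightarrow> a \<le> a' \<longrightarrow> a' < d \<longrightarrow> \<bar>integral {a..a'} (\<lambda>t. h t * g t)\<bar> < e"
  proof (intro exI[of _ "min d0 d1"] conjI allI impI)
    fix a a' :: real assume a: "0 < a" "a \<le> a'" "a' < min d0 d1"
    have "h x * \<bar>g x\<bar> \<le> h x" if "a \<le> x" for x
      using g1[of x] nn[of x] a that by (simp add: mult_left_le)
    then have "\<bar>integral {a..a'} (\<lambda>t. h t * g t)\<bar> \<le> integral {a..a'} h"
      using Henstock_Kurzweil_Integration.integral_norm_bound_integral[OF int hint, of a a'] a
        nn by (auto simp: abs_mult)
    also have "\<dots> \<le> C * a' powr p" using dC a by auto
    also have "\<dots> < e" using d1 a by auto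
    finally show "\<bar>integral {a..a'} (\<lambda>t. h t * g t)\<bar> < e" .
  qed (use d0 d1 in auto)
next
  fix e :: real assume e: "e > 0"
  have "eventually (\<lambda>x. h x < e * w / 4) at_top"
    using order_tendstoD(2)[OF lim, of "e * w / 4"] e w by simp
  then obtain B where B: "\<And>x. x \<ge> B \<Longrightarrow> h x < e * w / 4"
    by (auto simp: eventually_at_top_linorder)
  show "\<exists>B. \<forall>b b'. B \<le> b \<longrightarrow> b \<le> b' \<longrightarrow> \<bar>integral {b..b'} (\<lambda>t. h t * g t)\<bar> < e"
  proof (intro exI[of _ "max B 1"] allI impI)
    fix b b' :: real assume b: "max B 1 \<le> b" "b \<le> b'"
    have gi: "g integrable_on {b..b'}"
      by (intro integrable_continuous_real continuous_on_subset[OF gc]) auto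
    have "\<bar>integral {b..b'} (\<lambda>x. h x * g x)\<bar> \<le> 2 * h b * (2 / w)"
      by (rule L_bonnet(2)[OF gi b(2) gI anti nn]) (use b in auto)
    also have "\<dots> < e" using B[of b] b w by (simp add: field_simps)
    finally show "\<bar>integral {b..b'} (\<lambda>t. h t * g t)\<bar> < e" .
  qed
qed

lemma slope_ineq:
  fixes f f' :: "real \<Rightarrow> real"
  assumes d1: "\<And>t. t > 0 \<Longrightarrow> (f has_real_derivative f' t) (at t)"
    and cvx: "convex_on {0<..} f"
    and xy: "0 < x" "x < y"
  shows "f' x \<le> (f y - f x) / (y - x)" "(f y - f x) / (y - x) \<le> f' y"
proof -
  have Dx: "((\<lambda>t. (f t - f x) / (t - x)) \<longlongrightarrow> f' x) (at_right x)"
    using d1[OF xy(1)] unfolding has_field_derivative_iff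
    by (rule tendsto_mono[rotated]) (simp add: at_le)
  have "eventually (\<lambda>t. (f t - f x) / (t - x) \<le> (f y - f x) / (y - x)) (at_right x)"
    unfolding eventually_at_right_field
  proof (intro exI[of _ y] conjI allI impI)
    fix t assume t: "x < t" "t < y"
    have "(f x - f t) / (x - t) \<le> (f x - f y) / (x - y)"
      using convex_on_slope_le(1)[OF cvx _ _ t] xy t by auto
    then show "(f t - f x) / (t - x) \<le> (f y - f x) / (y - x)"
      by (metis minus_diff_eq minus_divide_divide)
  qed (use xy in auto)
  then show "f' x \<le> (f y - f x) / (y - x)"
    using tendsto_upperbound[OF Dx] by (simp add: trivial_limit_at_right_real)
  have "(\<lambda>t. (f t - f y) / (t - y)) \<midarrow>y\<rightarrow> f' y"
    using d1[of y] xy(1,2) unfolding has_field_derivative_iff by simp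
  then have Dy: "((\<lambda>t. (f t - f y) / (t - y)) \<longlongrightarrow> f' y) (at_left y)"
    by (rule tendsto_mono[rotated]) (simp add: at_le)
  have "eventually (\<lambda>t. (f y - f x) / (y - x) \<le> (f t - f y) / (t - y)) (at_left y)"
    unfolding eventually_at_left_field
  proof (intro exI[of _ x] conjI allI impI)
    fix t assume t: "x < t" "t < y"
    have "(f x - f y) / (x - y) \<le> (f t - f y) / (t - y)"
      using convex_on_slope_le(2)[OF cvx _ _ t] xy t by auto
    then show "(f y - f x) / (y - x) \<le> (f t - f y) / (t - y)"
      by (metis minus_diff_eq minus_divide_divide)
  qed (use xy in auto)
  then show "(f y - f x) / (y - x) \<le> f' y"
    using tendsto_lowerbound[OF Dy] by (simp add: trivial_limit_at_left_real)
qed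

lemma f_facts:
  fixes f f' :: "real \<Rightarrow> real"
  assumes lim_inf: "(f \<longlongrightarrow> 0) at_top"
    and d1: "\<And>t. t > 0 \<Longrightarrow> (f has_real_derivative f' t) (at t)"
    and cvx: "convex_on {0<..} f"
  shows "\<And>x y. 0 < x \<Longrightarrow> x \<le> y \<Longrightarrow> f' x \<le> f' y"
    and "\<And>x. 0 < x \<Longrightarrow> f' x \<le> 0"
    and "\<And>x y. 0 < x \<Longrightarrow> x \<le> y \<Longrightarrow> f y \<le> f x"
    and "\<And>x. 0 < x \<Longrightarrow> 0 \<le> f x"
proof -
  have S: "f' x \<le> (f y - f x) / (y - x)" "(f y - f x) / (y - x) \<le> f' y"
    if "0 < x" "x < y" for x y
    using slope_ineq[of f f' x y] d1 cvx that by blast+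
  show mono': "f' x \<le> f' y" if "0 < x" "x \<le> y" for x y
    using S[of x y] that by (cases "x = y") auto
  show neg: "f' x \<le> 0" if x: "0 < x" for x
  proof (rule ccontr)
    assume "\<not> f' x \<le> 0"
    then have p: "f' x > 0" by simp
    have "eventually (\<lambda>y. f y < 1) at_top" using order_tendstoD(2)[OF lim_inf] by simp
    moreover have "eventually (\<lambda>y. y \<ge> x + 1 + (1 + \<bar>f x\<bar>) / f' x) at_top"
      by (rule eventually_ge_at_top)
    ultimately have "eventually (\<lambda>y. f y < 1 \<and> y \<ge> x + 1 + (1 + \<bar>f x\<bar>) / f' x) at_top"
      by (rule eventually_conj)
    then obtain N where N: "\<And>y. y \<ge> N \<Longrightarrow> f y < 1 \<and> y \<ge> x + 1 + (1 + \<bar>f x\<bar>) / f' x"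
      by (auto simp: eventually_at_top_linorder)
    obtain y where y: "f y < 1" "y \<ge> x + 1 + (1 + \<bar>f x\<bar>) / f' x" using N[of N] by blast
    have xy: "x < y" using y(2) p by (smt (verit) divide_nonneg_pos abs_ge_zero)
    have "f' x * (y - x) \<le> f y - f x" using S(1)[OF x xy] xy by (simp add: field_simps)
    moreover have "f' x * (y - x) \<ge> 1 + \<bar>f x\<bar>"
    proof -
      have "y - x \<ge> (1 + \<bar>f x\<bar>) / f' x" using y(2) by simp
      then have "1 + \<bar>f x\<bar> \<le> (y - x) * f' x" using p by (simp add: divide_le_eq)
      then show ?thesis by (simp add: mult.commute)
    qed
    ultimately show False using y(1) by linarith
  qed
  show anti: "f y \<le> f x" if "0 < x" "x \<le> y" for x y
  proof (cases "x = y")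
    case False
    then have xy: "x < y" using that by simp
    have "(f y - f x) / (y - x) \<le> 0" using S(2)[OF that(1) xy] neg[of y] that by simp
    then show ?thesis using xy by (simp add: divide_le_0_iff)
  qed simp
  show "0 \<le> f x" if "0 < x" for x
  proof -
    have "eventually (\<lambda>y. f y \<le> f x) at_top"
      using eventually_ge_at_top[of x] by eventually_elim (use anti that in auto)
    then show ?thesis using tendsto_upperbound[OF lim_inf] by simp
  qed
qed

lemma ibp:
  fixes u v u' v' :: "real \<Rightarrow> real"
  assumes "a \<le> b"
    and "\<And>x. x \<in> {a..b} \<Longrightarrow> (u has_real_derivative u' x) (at x)"
    and "\<And>x. x \<in> {a..b} \<Longrightarrow> (v has_real_derivative v' x) (at x)"
    and c1: "continuous_on {a..b} (\<lambda>x. u' x * v x)"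
    and c2: "continuous_on {a..b} (\<lambda>x. u x * v' x)"
  shows "integral {a..b} (\<lambda>x. u x * v' x) = u b * v b - u a * v a - integral {a..b} (\<lambda>x. u' x * v x)"
proof -
  have "((\<lambda>x. u' x * v x + u x * v' x) has_integral (u b * v b - u a * v a)) {a..b}"
    using assms(1-3) by (intro FTC_real) (auto intro!: derivative_eq_intros)
  then have "integral {a..b} (\<lambda>x. u' x * v x + u x * v' x) = u b * v b - u a * v a"
    by (rule integral_unique)
  moreover have "integral {a..b} (\<lambda>x. u' x * v x + u x * v' x) =
      integral {a..b} (\<lambda>x. u' x * v x) + integral {a..b} (\<lambda>x. u x * v' x)"
    by (intro integral_add integrable_continuous_real c1 c2)
  ultimately show ?thesis by simp
qed

lemma contf_on:
  fixes f f' :: "real \<Rightarrow> real"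
  assumes "\<And>t. t > 0 \<Longrightarrow> (f has_real_derivative f' t) (at t)"
  shows "continuous_on {0<..} f"
  by (rule continuous_at_imp_continuous_on) (use assms in \<open>auto intro: DERIV_isCont\<close>)

lemma powr_inv_alg:
  fixes w s :: real assumes "w > 0"
  shows "(1 / w) powr (1 - s) = w powr (s - 1)" "(1 / w) powr (- s) / w = w powr (s - 1)"
    "w powr (1 - s) * w powr (s - 1) = 1"
  using assms by (auto simp: powr_divide powr_minus_divide powr_diff powr_add[symmetric] field_simps)

lemma fst_tendsto0: "(fst \<longlongrightarrow> (0::real)) (at_right 0 \<times>\<^sub>F F)"
  unfolding filterlim_def using order_trans[OF filtermap_fst_prod_filter at_within_le_nhds] .

lemma partA1:
  fixes f f' :: "real \<Rightarrow> real" and \<sigma> :: real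
  assumes lim_inf: "(f \<longlongrightarrow> 0) at_top"
    and d1: "\<And>t. t > 0 \<Longrightarrow> (f has_real_derivative f' t) (at t)"
    and contf': "continuous_on {0<..} f'"
    and mono': "\<And>x y. 0 < x \<Longrightarrow> x \<le> y \<Longrightarrow> f' x \<le> f' y"
    and neg: "\<And>x. 0 < x \<Longrightarrow> f' x \<le> 0"
    and anti: "\<And>x y. 0 < x \<Longrightarrow> x \<le> y \<Longrightarrow> f y \<le> f x"
    and nn: "\<And>x. 0 < x \<Longrightarrow> 0 \<le> f x"
    and f0: "(f \<longlongrightarrow> f 0) (at_right 0)"
    and s: "0 < \<sigma>" "\<sigma> < 1"
    and lp: "((\<lambda>t. t powr \<sigma> * f' t) \<longlongrightarrow> 0) (at_right 0)"
  shows "((\<lambda>\<omega>. \<omega> powr (2 - \<sigma>) * Fcos f \<omega>) \<longlongrightarrow> 0) at_top"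
proof -
  have contf: "continuous_on {0<..} f" by (rule contf_on[OF d1])
  have fle: "f x \<le> f 0" if "x > 0" for x
  proof -
    have "eventually (\<lambda>t. f x \<le> f t) (at_right 0)"
      unfolding eventually_at_right_field using that anti by (intro exI[of _ x]) auto
    then show ?thesis using tendsto_lowerbound[OF f0] by (simp add: trivial_limit_at_right_real)
  qed
  have f00: "0 \<le> f 0" using fle[of 1] nn[of 1] by simp
  have ExC: "((\<lambda>p. integral {fst p..snd p} (\<lambda>t. f t * cos (t * w))) \<longlongrightarrow> Fcos f w) (at_right 0 \<times>\<^sub>F at_top)"
    if w: "w > 0" for w
    unfolding Fcos_def
  proof (rule L_exist[OF w osc_cos[OF w] contf anti nn lim_inf])
    show "\<exists>d0>0. \<exists>C p. p > 0 \<and> (\<forall>a a'. 0 < a \<longrightarrow> a \<le> a' \<longrightarrow> a' < d0 \<longrightarrow> integral {a..a'} f \<le> C * a' powr p)"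
    proof -
      have "integral {a..a'} f \<le> f 0 * a' powr 1" if a: "0 < a" "a \<le> a'" "a' < 1" for a a'
      proof -
      have "integral {a..a'} f \<le> integral {a..a'} (\<lambda>_. f 0)"
        using a fle by (intro integral_le integrable_continuous_real continuous_on_subset[OF contf]) auto
      also have "\<dots> = (a' - a) * f 0" using a by simp
      also have "\<dots> \<le> a' * f 0" using a f00 by (intro mult_right_mono) auto
      also have "\<dots> = f 0 * a' powr 1" using a by simp
      finally show "integral {a..a'} f \<le> f 0 * a' powr 1" .
      qed
      then show ?thesis using zero_less_one by blast
    qed
  qed
  define K where "K = 1 / (1 - \<sigma>) + 4"
  have "1 / (1 - \<sigma>) > 0" using s by simp
  then have K: "K > 0" unfolding K_def by linarith
  show ?thesis
    unfolding tendsto_iff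
  proof (intro allI impI)
    fix e :: real assume e: "e > 0"
    define \<epsilon> where "\<epsilon> = e / (2 * K)"
    have \<epsilon>: "\<epsilon> > 0" using e K by (simp add: \<epsilon>_def)
    have "eventually (\<lambda>t. dist (t powr \<sigma> * f' t) 0 < \<epsilon>) (at_right 0)"
      using lp \<epsilon> unfolding tendsto_iff by blast
    then obtain \<delta> where \<delta>: "\<delta> > 0" "\<And>t. 0 < t \<Longrightarrow> t < \<delta> \<Longrightarrow> \<bar>t powr \<sigma> * f' t\<bar> < \<epsilon>"
      by (auto simp: eventually_at_right_field)
    have gb: "- f' t \<le> \<epsilon> * t powr - \<sigma>" if "0 < t" "t < \<delta>" for t
    proof -
      have "\<bar>f' t\<bar> = \<bar>t powr \<sigma> * f' t\<bar> * t powr - \<sigma>"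
        using that by (simp add: abs_mult powr_minus field_simps)
      also have "\<dots> \<le> \<epsilon> * t powr - \<sigma>" using \<delta>(2)[OF that] by (intro mult_right_mono) auto
      finally show ?thesis by simp
    qed
    have "eventually (\<lambda>w. w \<ge> 2 / \<delta>) at_top" by (rule eventually_ge_at_top)
    then show "eventually (\<lambda>w. dist (w powr (2 - \<sigma>) * Fcos f w) 0 < e) at_top"
    proof eventually_elim
      case (elim w)
      have w: "w > 0" using elim \<delta> by (smt (verit) divide_pos_pos)
      define m where "m = 1 / w"
      have m: "0 < m" "m < \<delta>" using w elim \<delta> by (auto simp: m_def field_simps)
      have key: "eventually (\<lambda>p. \<bar>w * integral {fst p..snd p} (\<lambda>t. f t * cos (t * w)) - 0\<bar>
          \<le> \<bar>f (snd p)\<bar> + \<bar>f (fst p) * sin (fst p * w)\<bar> + \<epsilon> * K * w powr (\<sigma> - 1)) (at_right 0 \<times>\<^sub>F at_top)"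
      proof (rule ev_PF[OF _ m(1)])
        fix a b assume ab: "0 < a" "a < m" "m < b"
        have cf: "continuous_on {a..b} f" "continuous_on {a..b} f'"
          using ab m by (auto intro: continuous_on_subset[OF contf] continuous_on_subset[OF contf'])
        have "integral {a..b} (\<lambda>x. f x * (cos (x * w) * w)) =
            f b * sin (b * w) - f a * sin (a * w) - integral {a..b} (\<lambda>x. f' x * sin (x * w))"
          by (rule ibp) (use ab m d1 in \<open>auto intro!: derivative_eq_intros continuous_intros cf\<close>)
        moreover have "integral {a..b} (\<lambda>x. f x * (cos (x * w) * w)) = w * integral {a..b} (\<lambda>x. f x * cos (x * w))"
          by (simp add: mult.commute mult.left_commute flip: integral_mult_right)
        ultimately have eq: "w * integral {a..b} (\<lambda>x. f x * cos (x * w)) =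
            f b * sin (b * w) - f a * sin (a * w) - integral {a..b} (\<lambda>x. f' x * sin (x * w))" by simp
        have ci: "(\<lambda>x. f' x * sin (x * w)) integrable_on {c..d}" if "0 < c" for c d
          using that by (intro integrable_continuous_real continuous_intros continuous_on_subset[OF contf']) auto
        have split: "integral {a..b} (\<lambda>x. f' x * sin (x * w)) =
            integral {a..m} (\<lambda>x. f' x * sin (x * w)) + integral {m..b} (\<lambda>x. f' x * sin (x * w))"
          using ab by (intro Henstock_Kurzweil_Integration.integral_combine[symmetric] ci) auto
        have J1: "\<bar>integral {a..m} (\<lambda>x. f' x * sin (x * w))\<bar> \<le> \<epsilon> * (m powr (1 - \<sigma>) / (1 - \<sigma>))"
        proof -
          have "\<bar>integral {a..m} (\<lambda>x. f' x * sin (x * w))\<bar> \<le> integral {a..m} (\<lambda>x. \<epsilon> * x powr - \<sigma>)"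
          proof (rule Henstock_Kurzweil_Integration.integral_norm_bound_integral[where f="\<lambda>x. f' x * sin (x * w)", simplified])
            show "(\<lambda>x. f' x * sin (x * w)) integrable_on {a..m}" using ab by (intro ci)
            show "(\<lambda>x. \<epsilon> * x powr - \<sigma>) integrable_on {a..m}"
              using integrable_on_cmult_left[OF powr_int_le(1)[of a m \<sigma>], of \<epsilon>] ab s by auto
            fix x assume x: "x \<in> {a..m}"
            have "\<bar>f' x * sin (x * w)\<bar> \<le> \<bar>f' x\<bar>" by (simp add: abs_mult mult_left_le)
            also have "\<dots> \<le> \<epsilon> * x powr - \<sigma>" using gb[of x] neg[of x] x ab m by auto
            finally show "\<bar>f' x * sin (x * w)\<bar> \<le> \<epsilon> * x powr - \<sigma>" .
          qed
          also have "\<dots> = \<epsilon> * integral {a..m} (\<lambda>x. x powr - \<sigma>)" by simp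
          also have "\<dots> \<le> \<epsilon> * (m powr (1 - \<sigma>) / (1 - \<sigma>))"
            using powr_int_le(2)[of a m \<sigma>] ab s \<epsilon> by (intro mult_left_mono) auto
          finally show ?thesis .
        qed
        have J2: "\<bar>integral {m..b} (\<lambda>x. f' x * sin (x * w))\<bar> \<le> 2 * (\<epsilon> * m powr - \<sigma>) * (2 / w)"
        proof -
          have gi: "(\<lambda>t. sin (t * w)) integrable_on {m..b}"
            by (intro integrable_continuous_real continuous_intros)
          have "\<bar>integral {m..b} (\<lambda>x. - f' x * sin (x * w))\<bar> \<le> 2 * (- f' m) * (2 / w)"
            by (rule L_bonnet(2)[OF gi]) (use ab m mono' neg osc_sin(3)[OF w] in auto)
          also have "\<dots> \<le> 2 * (\<epsilon> * m powr - \<sigma>) * (2 / w)"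
            using gb[OF m] w by (intro mult_right_mono) auto
          finally show ?thesis by simp
        qed
        have "\<epsilon> * (m powr (1 - \<sigma>) / (1 - \<sigma>)) + 2 * (\<epsilon> * m powr - \<sigma>) * (2 / w) = \<epsilon> * K * w powr (\<sigma> - 1)"
        proof -
          have e1: "m powr (1 - \<sigma>) = w powr (\<sigma> - 1)" "m powr - \<sigma> / w = w powr (\<sigma> - 1)"
            using powr_inv_alg[OF w, of \<sigma>] unfolding m_def by auto
          have "2 * (\<epsilon> * m powr - \<sigma>) * (2 / w) = 4 * \<epsilon> * (m powr - \<sigma> / w)" by (simp add: field_simps)
          then show ?thesis using s unfolding e1 K_def by (simp add: field_simps)
        qed
        moreover have "\<bar>f b * sin (b * w)\<bar> \<le> \<bar>f b\<bar>" by (simp add: abs_mult mult_left_le)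
        ultimately show "\<bar>w * integral {fst (a, b)..snd (a, b)} (\<lambda>t. f t * cos (t * w)) - 0\<bar>
          \<le> \<bar>f (snd (a, b))\<bar> + \<bar>f (fst (a, b)) * sin (fst (a, b) * w)\<bar> + \<epsilon> * K * w powr (\<sigma> - 1)"
          unfolding fst_conv snd_conv using eq split J1 J2 by (smt (verit))
      qed
      have lim1: "((\<lambda>p. w * integral {fst p..snd p} (\<lambda>t. f t * cos (t * w))) \<longlongrightarrow> w * Fcos f w) (at_right 0 \<times>\<^sub>F at_top)"
        by (intro tendsto_mult_left ExC w)
      have lim2: "((\<lambda>p. \<bar>f (snd p)\<bar> + \<bar>f (fst p) * sin (fst p * w)\<bar> + \<epsilon> * K * w powr (\<sigma> - 1))
          \<longlongrightarrow> \<bar>0\<bar> + \<bar>f 0 * sin (0 * w)\<bar> + \<epsilon> * K * w powr (\<sigma> - 1)) (at_right 0 \<times>\<^sub>F at_top)"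
        by (intro tendsto_intros filterlim_compose[OF lim_inf filterlim_snd_prod]
            filterlim_compose[OF f0 filterlim_fst_prod] fst_tendsto0)
      have "\<bar>w * Fcos f w - 0\<bar> \<le> \<epsilon> * K * w powr (\<sigma> - 1)"
        using L_pass[OF PF_nonbot lim1 lim2 key] by simp
      then have "w powr (1 - \<sigma>) * \<bar>w * Fcos f w\<bar> \<le> w powr (1 - \<sigma>) * (\<epsilon> * K * w powr (\<sigma> - 1))"
        by (intro mult_left_mono) auto
      also have "\<dots> = \<epsilon> * K" using powr_inv_alg(3)[OF w, of \<sigma>] by (simp add: field_simps)
      also have "\<dots> < e" using e K by (simp add: \<epsilon>_def)
      finally have "w powr (1 - \<sigma>) * \<bar>w * Fcos f w\<bar> < e" .
      moreover have "w powr (2 - \<sigma>) = w powr (1 - \<sigma>) * w"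
      proof -
        have "w powr (2 - \<sigma>) = w powr ((1 - \<sigma>) + 1)" by simp
        also have "\<dots> = w powr (1 - \<sigma>) * w powr 1" by (rule powr_add)
        finally show ?thesis using w by simp
      qed
      ultimately show ?case using w by (simp add: dist_real_def abs_mult)
    qed
  qed
qed

lemma partA2:
  fixes f f' :: "real \<Rightarrow> real"
  assumes lim_inf: "(f \<longlongrightarrow> 0) at_top"
    and d1: "\<And>t. t > 0 \<Longrightarrow> (f has_real_derivative f' t) (at t)"
    and contf': "continuous_on {0<..} f'"
    and mono': "\<And>x y. 0 < x \<Longrightarrow> x \<le> y \<Longrightarrow> f' x \<le> f' y"
    and neg: "\<And>x. 0 < x \<Longrightarrow> f' x \<le> 0"
    and anti: "\<And>x y. 0 < x \<Longrightarrow> x \<le> y \<Longrightarrow> f y \<le> f x"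
    and nn: "\<And>x. 0 < x \<Longrightarrow> 0 \<le> f x"
    and f0: "(f \<longlongrightarrow> f 0) (at_right 0)"
  shows "((\<lambda>\<omega>. \<omega> * Fsin f \<omega>) \<longlongrightarrow> f 0) at_top"
proof -
  have contf: "continuous_on {0<..} f" by (rule contf_on[OF d1])
  have fle: "f x \<le> f 0" if "x > 0" for x
  proof -
    have "eventually (\<lambda>t. f x \<le> f t) (at_right 0)"
      unfolding eventually_at_right_field using that anti by (intro exI[of _ x]) auto
    then show ?thesis using tendsto_lowerbound[OF f0] by (simp add: trivial_limit_at_right_real)
  qed
  have f00: "0 \<le> f 0" using fle[of 1] nn[of 1] by simp
  have ExS: "((\<lambda>p. integral {fst p..snd p} (\<lambda>t. f t * sin (t * w))) \<longlongrightarrow> Fsin f w) (at_right 0 \<times>\<^sub>F at_top)"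
    if w: "w > 0" for w
    unfolding Fsin_def
  proof (rule L_exist[OF w osc_sin[OF w] contf anti nn lim_inf])
    show "\<exists>d0>0. \<exists>C p. p > 0 \<and> (\<forall>a a'. 0 < a \<longrightarrow> a \<le> a' \<longrightarrow> a' < d0 \<longrightarrow> integral {a..a'} f \<le> C * a' powr p)"
    proof -
      have "integral {a..a'} f \<le> f 0 * a' powr 1" if a: "0 < a" "a \<le> a'" "a' < 1" for a a'
      proof -
      have "integral {a..a'} f \<le> integral {a..a'} (\<lambda>_. f 0)"
        using a fle by (intro integral_le integrable_continuous_real continuous_on_subset[OF contf]) auto
      also have "\<dots> = (a' - a) * f 0" using a by simp
      also have "\<dots> \<le> a' * f 0" using a f00 by (intro mult_right_mono) auto
      also have "\<dots> = f 0 * a' powr 1" using a by simp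
      finally show "integral {a..a'} f \<le> f 0 * a' powr 1" .
      qed
      then show ?thesis using zero_less_one by blast
    qed
  qed
  show ?thesis
    unfolding tendsto_iff
  proof (intro allI impI)
    fix e :: real assume e: "e > 0"
    have "eventually (\<lambda>t. dist (f t) (f 0) < e / 2) (at_right 0)"
      using f0 e unfolding tendsto_iff by (meson half_gt_zero)
    then obtain \<delta>0 where \<delta>0: "\<delta>0 > 0" "\<And>t. 0 < t \<Longrightarrow> t < \<delta>0 \<Longrightarrow> \<bar>f t - f 0\<bar> < e / 2"
      by (auto simp: eventually_at_right_field dist_real_def)
    define \<delta> where "\<delta> = \<delta>0 / 2"
    have \<delta>: "0 < \<delta>" "\<delta> < \<delta>0" using \<delta>0 by (auto simp: \<delta>_def)
    have fd: "f 0 - f \<delta> < e / 2" using \<delta>0(2)[OF \<delta>] by linarith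
    define G where "G = - f' \<delta>"
    have G: "G \<ge> 0" using neg[OF \<delta>(1)] by (simp add: G_def)
    have "eventually (\<lambda>w. w \<ge> 8 * G / e + 1) at_top" by (rule eventually_ge_at_top)
    then show "eventually (\<lambda>w. dist (w * Fsin f w) (f 0) < e) at_top"
    proof eventually_elim
      case (elim w)
      have "8 * G / e \<ge> 0" using G e by simp
      then have w: "w > 0" using elim by linarith
      have wG: "4 * G / w < e / 2"
      proof -
        have "8 * G < e * w" using elim e G by (simp add: field_simps)
        then show ?thesis using w by (simp add: field_simps)
      qed
      have key: "eventually (\<lambda>p. \<bar>w * integral {fst p..snd p} (\<lambda>t. f t * sin (t * w)) - f 0\<bar>
          \<le> \<bar>f (fst p) * cos (fst p * w) - f 0\<bar> + \<bar>f (snd p)\<bar> + (f (fst p) - f \<delta>) + 4 * G / w)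
          (at_right 0 \<times>\<^sub>F at_top)"
      proof (rule ev_PF[OF _ \<delta>(1)])
        fix a b assume ab: "0 < a" "a < \<delta>" "\<delta> < b"
        have cf: "continuous_on {a..b} f" "continuous_on {a..b} f'"
          using ab \<delta> by (auto intro: continuous_on_subset[OF contf] continuous_on_subset[OF contf'])
        have "integral {a..b} (\<lambda>x. f x * (sin (x * w) * w)) =
            f b * - cos (b * w) - f a * - cos (a * w) - integral {a..b} (\<lambda>x. f' x * - cos (x * w))"
          by (rule ibp) (use ab \<delta> d1 in \<open>auto intro!: derivative_eq_intros continuous_intros cf\<close>)
        moreover have "integral {a..b} (\<lambda>x. f x * (sin (x * w) * w)) = w * integral {a..b} (\<lambda>x. f x * sin (x * w))"
          by (simp add: mult.commute mult.left_commute flip: integral_mult_right)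
        moreover have "integral {a..b} (\<lambda>x. f' x * - cos (x * w)) = - integral {a..b} (\<lambda>x. f' x * cos (x * w))"
          by (simp flip: integral_neg)
        ultimately have eq: "w * integral {a..b} (\<lambda>x. f x * sin (x * w)) =
            f a * cos (a * w) - f b * cos (b * w) + integral {a..b} (\<lambda>x. f' x * cos (x * w))" by simp
        have ci: "(\<lambda>x. f' x * cos (x * w)) integrable_on {c..d}" if "0 < c" for c d
          using that by (intro integrable_continuous_real continuous_intros continuous_on_subset[OF contf']) auto
        have split: "integral {a..b} (\<lambda>x. f' x * cos (x * w)) =
            integral {a..\<delta>} (\<lambda>x. f' x * cos (x * w)) + integral {\<delta>..b} (\<lambda>x. f' x * cos (x * w))"
          using ab by (intro Henstock_Kurzweil_Integration.integral_combine[symmetric] ci) auto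
        have J1: "\<bar>integral {a..\<delta>} (\<lambda>x. f' x * cos (x * w))\<bar> \<le> f a - f \<delta>"
        proof -
          have fi: "(f' has_integral f \<delta> - f a) {a..\<delta>}"
            using ab by (intro FTC_real) (auto intro: d1)
          have "\<bar>integral {a..\<delta>} (\<lambda>x. f' x * cos (x * w))\<bar> \<le> integral {a..\<delta>} (\<lambda>x. - f' x)"
          proof (rule Henstock_Kurzweil_Integration.integral_norm_bound_integral[where f="\<lambda>x. f' x * cos (x * w)", simplified])
            show "(\<lambda>x. f' x * cos (x * w)) integrable_on {a..\<delta>}" using ab by (intro ci)
            show "(\<lambda>x. - f' x) integrable_on {a..\<delta>}" using fi by (intro integrable_neg) blast
            fix x assume x: "x \<in> {a..\<delta>}"
            have "\<bar>f' x * cos (x * w)\<bar> \<le> \<bar>f' x\<bar>" by (simp add: abs_mult mult_left_le)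
            also have "\<dots> = - f' x" using neg[of x] x ab by auto
            finally show "\<bar>f' x * cos (x * w)\<bar> \<le> - f' x" .
          qed
          also have "\<dots> = f a - f \<delta>" using integral_unique[OF fi] by (simp add: integral_neg)
          finally show ?thesis .
        qed
        have J2: "\<bar>integral {\<delta>..b} (\<lambda>x. f' x * cos (x * w))\<bar> \<le> 4 * G / w"
        proof -
          have gi: "(\<lambda>t. cos (t * w)) integrable_on {\<delta>..b}"
            by (intro integrable_continuous_real continuous_intros)
          have "\<bar>integral {\<delta>..b} (\<lambda>x. - f' x * cos (x * w))\<bar> \<le> 2 * (- f' \<delta>) * (2 / w)"
            by (rule L_bonnet(2)[OF gi]) (use ab \<delta> mono' neg osc_cos(3)[OF w] in auto)
          then show ?thesis by (simp add: G_def)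
        qed
        have "\<bar>f b * cos (b * w)\<bar> \<le> \<bar>f b\<bar>" by (simp add: abs_mult mult_left_le)
        then show "\<bar>w * integral {fst (a, b)..snd (a, b)} (\<lambda>t. f t * sin (t * w)) - f 0\<bar>
          \<le> \<bar>f (fst (a, b)) * cos (fst (a, b) * w) - f 0\<bar> + \<bar>f (snd (a, b))\<bar> + (f (fst (a, b)) - f \<delta>) + 4 * G / w"
          unfolding fst_conv snd_conv using eq split J1 J2 by (smt (verit))
      qed
      have lim1: "((\<lambda>p. w * integral {fst p..snd p} (\<lambda>t. f t * sin (t * w))) \<longlongrightarrow> w * Fsin f w) (at_right 0 \<times>\<^sub>F at_top)"
        by (intro tendsto_mult_left ExS w)
      have lim2: "((\<lambda>p. \<bar>f (fst p) * cos (fst p * w) - f 0\<bar> + \<bar>f (snd p)\<bar> + (f (fst p) - f \<delta>) + 4 * G / w)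
          \<longlongrightarrow> \<bar>f 0 * cos (0 * w) - f 0\<bar> + \<bar>0\<bar> + (f 0 - f \<delta>) + 4 * G / w) (at_right 0 \<times>\<^sub>F at_top)"
        by (intro tendsto_intros filterlim_compose[OF lim_inf filterlim_snd_prod]
            filterlim_compose[OF f0 filterlim_fst_prod] fst_tendsto0)
      have "\<bar>w * Fsin f w - f 0\<bar> \<le> (f 0 - f \<delta>) + 4 * G / w"
        using L_pass[OF PF_nonbot lim1 lim2 key] by simp
      then show ?case using fd wG by (simp add: dist_real_def)
    qed
  qed
qed

lemma powr_1m: "(w::real) > 0 \<Longrightarrow> w powr (1 - s) = w * w powr - s"
proof -
  assume w: "w > 0"
  have "w powr (1 + - s) = w powr 1 * w powr - s" by (rule powr_add)
  then show ?thesis using w by simp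
qed

lemma subst_int:
  fixes k :: "real \<Rightarrow> real" and w a b \<sigma> :: real
  assumes w: "w > 0" and ab: "0 < a" "a \<le> b"
  shows "w powr (1 - \<sigma>) * integral {a..b} (\<lambda>t. t powr - \<sigma> * k (t * w)) =
    integral {w * a..w * b} (\<lambda>u. u powr - \<sigma> * k u)"
proof -
  have img: "(\<lambda>x. x / w) ` {w * a..w * b} = {a..b}"
  proof
    show "(\<lambda>x. x / w) ` {w * a..w * b} \<subseteq> {a..b}" using w by (auto simp: field_simps)
    show "{a..b} \<subseteq> (\<lambda>x. x / w) ` {w * a..w * b}"
    proof
      fix x assume "x \<in> {a..b}"
      then have "w * x \<in> {w * a..w * b}" "x = (w * x) / w" using w by auto
      then show "x \<in> (\<lambda>x. x / w) ` {w * a..w * b}" by blast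
    qed
  qed
  have "integral {a..b} (\<lambda>x. (w * x) powr - \<sigma> * k (w * x)) = (1 / w) * integral {w * a..w * b} (\<lambda>u. u powr - \<sigma> * k u)"
    using integral_stretch_real[of w "w * a" "w * b" "\<lambda>u. u powr - \<sigma> * k u"] w img by simp
  moreover have "integral {a..b} (\<lambda>x. (w * x) powr - \<sigma> * k (w * x)) = integral {a..b} (\<lambda>x. w powr - \<sigma> * (x powr - \<sigma> * k (x * w)))"
    by (rule integral_cong) (use w ab in \<open>auto simp: powr_mult mult.commute\<close>)
  moreover have "\<dots> = w powr - \<sigma> * integral {a..b} (\<lambda>x. x powr - \<sigma> * k (x * w))"
    by simp
  ultimately have e: "w powr - \<sigma> * integral {a..b} (\<lambda>x. x powr - \<sigma> * k (x * w)) = (1 / w) * integral {w * a..w * b} (\<lambda>u. u powr - \<sigma> * k u)"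
    by simp
  have "w powr (1 - \<sigma>) = w * w powr - \<sigma>" using w by (rule powr_1m)
  then show ?thesis using e w by (simp add: field_simps)
qed

lemma scale_right0: "w > 0 \<Longrightarrow> filterlim (\<lambda>x::real. w * x) (at_right 0) (at_right 0)"
  unfolding filterlim_at
  by (auto simp: eventually_at_right_field intro!: exI[of _ 1] tendsto_eq_intros)

lemma scale_top: "w > 0 \<Longrightarrow> filterlim (\<lambda>x::real. w * x) at_top at_top"
  by (rule filterlim_tendsto_pos_mult_at_top[OF tendsto_const _ filterlim_ident])

lemma scale_PF:
  fixes w :: real assumes "w > 0"
  shows "filterlim (\<lambda>p. (w * fst p, w * snd p)) (at_right 0 \<times>\<^sub>F at_top) (at_right 0 \<times>\<^sub>F at_top)"
  by (intro filterlim_Pair filterlim_compose[OF scale_right0[OF assms] filterlim_fst_prod]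
      filterlim_compose[OF scale_top[OF assms] filterlim_snd_prod])

lemma powr_alg2:
  fixes w U s :: real assumes "w > 0" "U > 0"
  shows "w powr (1 - s) * (U / w) powr (1 - s) = U powr (1 - s)"
    "w powr (1 - s) * ((U / w) powr - s / w) = U powr - s"
proof -
  show "w powr (1 - s) * (U / w) powr (1 - s) = U powr (1 - s)"
    using assms by (simp add: powr_divide)
  have "w powr (1 - s) = w * w powr - s" using assms by (intro powr_1m)
  then show "w powr (1 - s) * ((U / w) powr - s / w) = U powr - s"
    using assms by (simp add: powr_divide powr_minus_divide field_simps)
qed

lemma int_cmult:
  fixes f :: "real \<Rightarrow> real"
  shows "f integrable_on S \<Longrightarrow> (\<lambda>x. c * f x) integrable_on S"
  using integrable_on_cmult_left[of f S c] by simp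

lemma lin3: "(P::real) * (e * (A / d) + 4 * (c + 1) * B + 4 * c * B) = e * (P * A) / d + 4 * (c + 1) * (P * B) + 4 * c * (P * B)"
  by (simp add: algebra_simps)

lemma B_gen:
  fixes f k :: "real \<Rightarrow> real" and \<sigma> c K :: real
  assumes lim_inf: "(f \<longlongrightarrow> 0) at_top"
    and contf: "continuous_on {0<..} f"
    and anti: "\<And>x y. 0 < x \<Longrightarrow> x \<le> y \<Longrightarrow> f y \<le> f x"
    and nn: "\<And>x. 0 < x \<Longrightarrow> 0 \<le> f x"
    and s: "0 < \<sigma>" "\<sigma> < 1" and c: "c > 0"
    and lc: "((\<lambda>t. t powr \<sigma> * f t) \<longlongrightarrow> c) (at_right 0)"
    and kc: "continuous_on UNIV k"
    and k1: "\<And>x. \<bar>k x\<bar> \<le> 1"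
    and kI: "\<And>w c d. w > 0 \<Longrightarrow> c \<le> d \<Longrightarrow> \<bar>integral {c..d} (\<lambda>t. k (t * w))\<bar> \<le> 2 / w"
    and KL: "((\<lambda>p. integral {fst p..snd p} (\<lambda>u. u powr - \<sigma> * k u)) \<longlongrightarrow> K) (at_right 0 \<times>\<^sub>F at_top)"
  shows "((\<lambda>w. w powr (1 - \<sigma>) * improper_integral_0_inf (\<lambda>t. f t * k (t * w))) \<longlongrightarrow> c * K) at_top"
proof -
  have fpow: "f t = (t powr \<sigma> * f t) * t powr - \<sigma>" if "t > 0" for t
    using that by (simp add: powr_minus field_simps)
  have "eventually (\<lambda>t. dist (t powr \<sigma> * f t) c < 1) (at_right 0)"
    using lc unfolding tendsto_iff by simp
  then obtain \<delta>0 where \<delta>0: "\<delta>0 > 0" "\<And>t. 0 < t \<Longrightarrow> t < \<delta>0 \<Longrightarrow> \<bar>t powr \<sigma> * f t - c\<bar> < 1"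
    by (auto simp: eventually_at_right_field dist_real_def)
  have fb: "f t \<le> (c + 1) * t powr - \<sigma>" if "0 < t" "t < \<delta>0" for t
  proof -
    have "t powr \<sigma> * f t \<le> c + 1" using \<delta>0(2)[OF that] by linarith
    then have "(t powr \<sigma> * f t) * t powr - \<sigma> \<le> (c + 1) * t powr - \<sigma>"
      by (intro mult_right_mono) auto
    then show ?thesis using fpow[OF that(1)] by linarith
  qed
  have pint: "(\<lambda>t. t powr - \<sigma>) integrable_on {a..b}" if "0 < a" for a b
    using that by (intro integrable_continuous_real continuous_intros) auto
  have gc: "continuous_on UNIV (\<lambda>t. k (t * w))" for w
    by (rule continuous_on_compose2[OF kc]) (auto intro!: continuous_intros)
  have Ex: "((\<lambda>p. integral {fst p..snd p} (\<lambda>t. f t * k (t * w))) \<longlongrightarrow> improper_integral_0_inf (\<lambda>t. f t * k (t * w))) (at_right 0 \<times>\<^sub>F at_top)"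
    if w: "w > 0" for w
  proof (rule L_exist[OF w gc k1 kI[OF w] contf anti nn lim_inf])
    have "integral {a..a'} f \<le> (c + 1) / (1 - \<sigma>) * a' powr (1 - \<sigma>)" if a: "0 < a" "a \<le> a'" "a' < \<delta>0" for a a'
    proof -
      have "integral {a..a'} f \<le> integral {a..a'} (\<lambda>t. (c + 1) * t powr - \<sigma>)"
      proof (rule integral_le)
        show "f integrable_on {a..a'}"
          using a by (intro integrable_continuous_real continuous_on_subset[OF contf]) auto
        show "(\<lambda>t. (c + 1) * t powr - \<sigma>) integrable_on {a..a'}"
          using a by (intro int_cmult pint)
      qed (use a fb in auto)
      also have "\<dots> = (c + 1) * integral {a..a'} (\<lambda>t. t powr - \<sigma>)" by simp
      also have "\<dots> \<le> (c + 1) * (a' powr (1 - \<sigma>) / (1 - \<sigma>))"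
        using powr_int_le(2)[of a a' \<sigma>] a s c by (intro mult_left_mono) auto
      finally show ?thesis by simp
    qed
    then show "\<exists>d0>0. \<exists>C p. p > 0 \<and> (\<forall>a a'. 0 < a \<longrightarrow> a \<le> a' \<longrightarrow> a' < d0 \<longrightarrow> integral {a..a'} f \<le> C * a' powr p)"
      using \<delta>0(1) s by (metis diff_gt_0_iff_gt)
  qed
  show ?thesis
    unfolding tendsto_iff
  proof (intro allI impI)
    fix e :: real assume e: "e > 0"
    define \<eta> where "\<eta> = e / 2"
    have \<eta>: "\<eta> > 0" "\<eta> < e" using e by (auto simp: \<eta>_def)
    have "((\<lambda>x. 4 * (2 * c + 1) * x powr - \<sigma>) \<longlongrightarrow> 4 * (2 * c + 1) * 0) at_top"
      by (intro tendsto_mult_left tendsto_neg_powr filterlim_ident) (use s in auto)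
    then have "eventually (\<lambda>x. 4 * (2 * c + 1) * x powr - \<sigma> < \<eta> / 2) at_top"
      using \<eta> by (intro order_tendstoD(2)) auto
    moreover have "eventually (\<lambda>x. x \<ge> (1::real)) at_top" by (rule eventually_ge_at_top)
    ultimately have "eventually (\<lambda>x. 4 * (2 * c + 1) * x powr - \<sigma> < \<eta> / 2 \<and> x \<ge> 1) at_top"
      by (rule eventually_conj)
    then obtain U where U: "4 * (2 * c + 1) * U powr - \<sigma> < \<eta> / 2" "U \<ge> 1"
      by (auto simp: eventually_at_top_linorder)
    have Up: "U powr (1 - \<sigma>) > 0" using U by simp
    define \<epsilon> where "\<epsilon> = min 1 (\<eta> * (1 - \<sigma>) / (2 * U powr (1 - \<sigma>)))"
    have \<epsilon>: "\<epsilon> > 0" "\<epsilon> \<le> 1" using \<eta> s Up by (auto simp: \<epsilon>_def)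
    have \<epsilon>U: "\<epsilon> * U powr (1 - \<sigma>) / (1 - \<sigma>) \<le> \<eta> / 2"
    proof -
      have "\<epsilon> \<le> \<eta> * (1 - \<sigma>) / (2 * U powr (1 - \<sigma>))" by (simp add: \<epsilon>_def)
      then have "\<epsilon> * U powr (1 - \<sigma>) \<le> \<eta> * (1 - \<sigma>) / 2" using Up by (simp add: field_simps)
      then show ?thesis using s by (simp add: field_simps)
    qed
    have "eventually (\<lambda>t. dist (t powr \<sigma> * f t) c < \<epsilon>) (at_right 0)"
      using lc \<epsilon> unfolding tendsto_iff by simp
    then obtain \<delta> where \<delta>: "\<delta> > 0" "\<And>t. 0 < t \<Longrightarrow> t < \<delta> \<Longrightarrow> \<bar>t powr \<sigma> * f t - c\<bar> < \<epsilon>"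
      by (auto simp: eventually_at_right_field dist_real_def)
    have "eventually (\<lambda>w. w \<ge> U / \<delta> + 1) at_top" by (rule eventually_ge_at_top)
    then show "eventually (\<lambda>w. dist (w powr (1 - \<sigma>) * improper_integral_0_inf (\<lambda>t. f t * k (t * w))) (c * K) < e) at_top"
    proof eventually_elim
      case (elim w)
      have "U / \<delta> > 0" using U \<delta> by simp
      then have w: "w > 0" using elim by linarith
      define m where "m = U / w"
      have m: "0 < m" "m < \<delta>"
      proof -
        show "0 < m" using U w by (simp add: m_def)
        have "U / \<delta> < w" using elim by linarith
        then have "U < w * \<delta>" using \<delta> by (simp add: field_simps)
        then show "m < \<delta>" using w by (simp add: m_def field_simps)
      qed
      define I where "I a b = integral {a..b} (\<lambda>t. f t * k (t * w))" for a b
      define T where "T a b = integral {a..b} (\<lambda>t. t powr - \<sigma> * k (t * w))" for a b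
      have key: "eventually (\<lambda>p. \<bar>(w powr (1 - \<sigma>) * integral {fst p..snd p} (\<lambda>t. f t * k (t * w))
          - c * integral {w * fst p..w * snd p} (\<lambda>u. u powr - \<sigma> * k u)) - 0\<bar> \<le> \<eta>) (at_right 0 \<times>\<^sub>F at_top)"
      proof (rule ev_PF[OF _ m(1)])
        fix a b assume ab: "0 < a" "a < m" "m < b"
        have Sab: "integral {w * a..w * b} (\<lambda>u. u powr - \<sigma> * k u) = w powr (1 - \<sigma>) * T a b"
          unfolding T_def using subst_int[OF w, of a b \<sigma> k] ab m by simp
        have fi: "(\<lambda>t. f t * k (t * w)) integrable_on {x..y}" if "0 < x" for x y
          using that by (intro integrable_continuous_real continuous_intros continuous_on_subset[OF contf]
              continuous_on_subset[OF gc]) auto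
        have ti: "(\<lambda>t. t powr - \<sigma> * k (t * w)) integrable_on {x..y}" if "0 < x" for x y
          using that by (intro integrable_continuous_real continuous_intros
              continuous_on_subset[OF gc]) auto
        have Isplit: "I a b = I a m + I m b"
          unfolding I_def using ab by (intro Henstock_Kurzweil_Integration.integral_combine[symmetric] fi) auto
        have Tsplit: "T a b = T a m + T m b"
          unfolding T_def using ab by (intro Henstock_Kurzweil_Integration.integral_combine[symmetric] ti) auto
        have D: "\<bar>I a m - c * T a m\<bar> \<le> \<epsilon> * (m powr (1 - \<sigma>) / (1 - \<sigma>))"
        proof -
          have "I a m - c * T a m = integral {a..m} (\<lambda>t. f t * k (t * w) - c * (t powr - \<sigma> * k (t * w)))"
            unfolding I_def T_def using ab
            by (subst integral_diff) (auto intro: fi int_cmult ti)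
          also have "\<bar>\<dots>\<bar> \<le> integral {a..m} (\<lambda>t. \<epsilon> * t powr - \<sigma>)"
          proof (rule Henstock_Kurzweil_Integration.integral_norm_bound_integral[where f="\<lambda>t. f t * k (t * w) - c * (t powr - \<sigma> * k (t * w))", simplified])
            show "(\<lambda>t. f t * k (t * w) - c * (t powr - \<sigma> * k (t * w))) integrable_on {a..m}"
              using ab by (intro integrable_diff fi int_cmult ti)
            show "(\<lambda>t. \<epsilon> * t powr - \<sigma>) integrable_on {a..m}"
              using ab by (intro int_cmult pint)
            fix t assume t: "t \<in> {a..m}"
            then have t0: "0 < t" "t < \<delta>" using ab m by auto
            have "\<bar>f t * k (t * w) - c * (t powr - \<sigma> * k (t * w))\<bar> = \<bar>f t - c * t powr - \<sigma>\<bar> * \<bar>k (t * w)\<bar>"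
              by (simp add: abs_mult[symmetric] algebra_simps)
            also have "\<dots> \<le> \<bar>f t - c * t powr - \<sigma>\<bar>" using k1[of "t * w"] by (simp add: mult_left_le)
            also have "\<bar>f t - c * t powr - \<sigma>\<bar> = \<bar>t powr \<sigma> * f t - c\<bar> * t powr - \<sigma>"
            proof -
              have inv: "t powr \<sigma> * t powr - \<sigma> = 1" using t0 by (simp add: powr_add[symmetric])
              have "(t powr \<sigma> * f t - c) * t powr - \<sigma> = f t * (t powr \<sigma> * t powr - \<sigma>) - c * t powr - \<sigma>"
                by (simp add: algebra_simps)
              also have "\<dots> = f t - c * t powr - \<sigma>" by (simp only: inv mult_1_right)
              finally have "f t - c * t powr - \<sigma> = (t powr \<sigma> * f t - c) * t powr - \<sigma>" by simp
              then show ?thesis by (simp add: abs_mult)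
            qed
            also have "\<dots> \<le> \<epsilon> * t powr - \<sigma>" using \<delta>(2)[OF t0] by (intro mult_right_mono) auto
            finally show "\<bar>f t * k (t * w) - c * (t powr - \<sigma> * k (t * w))\<bar> \<le> \<epsilon> * t powr - \<sigma>" .
          qed
          also have "\<dots> = \<epsilon> * integral {a..m} (\<lambda>t. t powr - \<sigma>)" by simp
          also have "\<dots> \<le> \<epsilon> * (m powr (1 - \<sigma>) / (1 - \<sigma>))"
            using powr_int_le(2)[of a m \<sigma>] ab s \<epsilon> by (intro mult_left_mono) auto
          finally show ?thesis .
        qed
        have fm: "f m \<le> (c + 1) * m powr - \<sigma>"
        proof -
          have "m powr \<sigma> * f m \<le> c + 1" using \<delta>(2)[OF m] \<epsilon> by linarith
          then have "(m powr \<sigma> * f m) * m powr - \<sigma> \<le> (c + 1) * m powr - \<sigma>"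
            by (intro mult_right_mono) auto
          then show ?thesis using fpow[OF m(1)] by linarith
        qed
        have gi: "(\<lambda>t. k (t * w)) integrable_on {m..b}"
          by (intro integrable_continuous_real continuous_on_subset[OF gc]) auto
        have B1: "\<bar>I m b\<bar> \<le> 2 * f m * (2 / w)"
          unfolding I_def by (rule L_bonnet(2)[OF gi]) (use ab m anti nn kI[OF w] in auto)
        have B2: "\<bar>T m b\<bar> \<le> 2 * m powr - \<sigma> * (2 / w)"
          unfolding T_def by (rule L_bonnet(2)[OF gi]) (use ab m s kI[OF w] in \<open>auto intro: powr_mono2'\<close>)
        have "\<bar>I a b - c * T a b\<bar> \<le> \<epsilon> * (m powr (1 - \<sigma>) / (1 - \<sigma>)) + 4 * (c + 1) * (m powr - \<sigma> / w) + 4 * c * (m powr - \<sigma> / w)"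
        proof -
          have "\<bar>c * T m b\<bar> \<le> c * (2 * m powr - \<sigma> * (2 / w))" unfolding abs_mult using B2 c by (intro mult_mono) auto
          moreover have "2 * f m * (2 / w) \<le> 4 * (c + 1) * (m powr - \<sigma> / w)" using fm w by (simp add: field_simps)
          moreover have "c * (2 * m powr - \<sigma> * (2 / w)) = 4 * c * (m powr - \<sigma> / w)" by simp
          moreover have "c * T a b = c * T a m + c * T m b" using Tsplit by (simp add: distrib_left)
          ultimately show ?thesis using D B1 Isplit by (smt (verit))
        qed
        then have "w powr (1 - \<sigma>) * \<bar>I a b - c * T a b\<bar> \<le> w powr (1 - \<sigma>) * (\<epsilon> * (m powr (1 - \<sigma>) / (1 - \<sigma>)) + 4 * (c + 1) * (m powr - \<sigma> / w) + 4 * c * (m powr - \<sigma> / w))"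
          by (intro mult_left_mono) auto
        also have "\<dots> = \<epsilon> * U powr (1 - \<sigma>) / (1 - \<sigma>) + 4 * (2 * c + 1) * U powr - \<sigma>"
        proof -
          have e1: "w powr (1 - \<sigma>) * m powr (1 - \<sigma>) = U powr (1 - \<sigma>)"
            and e2: "w powr (1 - \<sigma>) * (m powr - \<sigma> / w) = U powr - \<sigma>"
            using powr_alg2[OF w, of U \<sigma>] U unfolding m_def by auto
          have "w powr (1 - \<sigma>) * (\<epsilon> * (m powr (1 - \<sigma>) / (1 - \<sigma>)) + 4 * (c + 1) * (m powr - \<sigma> / w) + 4 * c * (m powr - \<sigma> / w))
            = \<epsilon> * (w powr (1 - \<sigma>) * m powr (1 - \<sigma>)) / (1 - \<sigma>) + 4 * (c + 1) * (w powr (1 - \<sigma>) * (m powr - \<sigma> / w))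
              + 4 * c * (w powr (1 - \<sigma>) * (m powr - \<sigma> / w))"
            by (rule lin3)
          then show ?thesis unfolding e1 e2 by (simp add: algebra_simps)
        qed
        also have "\<dots> \<le> \<eta>" using \<epsilon>U U by linarith
        finally have "w powr (1 - \<sigma>) * \<bar>I a b - c * T a b\<bar> \<le> \<eta>" .
        moreover have "w powr (1 - \<sigma>) * \<bar>I a b - c * T a b\<bar> = \<bar>w powr (1 - \<sigma>) * I a b - c * (w powr (1 - \<sigma>) * T a b)\<bar>"
        proof -
          have "\<bar>w powr (1 - \<sigma>) * (I a b - c * T a b)\<bar> = w powr (1 - \<sigma>) * \<bar>I a b - c * T a b\<bar>"
            by (simp add: abs_mult)
          moreover have "w powr (1 - \<sigma>) * (I a b - c * T a b) = w powr (1 - \<sigma>) * I a b - c * (w powr (1 - \<sigma>) * T a b)"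
            by (simp add: algebra_simps)
          ultimately show ?thesis by simp
        qed
        ultimately show "\<bar>(w powr (1 - \<sigma>) * integral {fst (a, b)..snd (a, b)} (\<lambda>t. f t * k (t * w))
          - c * integral {w * fst (a, b)..w * snd (a, b)} (\<lambda>u. u powr - \<sigma> * k u)) - 0\<bar> \<le> \<eta>"
          using Sab by (simp add: I_def)
      qed
      have SL: "((\<lambda>p. integral {w * fst p..w * snd p} (\<lambda>u. u powr - \<sigma> * k u)) \<longlongrightarrow> K) (at_right 0 \<times>\<^sub>F at_top)"
        using filterlim_compose[OF KL scale_PF[OF w]] by simp
      have lim1: "((\<lambda>p. w powr (1 - \<sigma>) * integral {fst p..snd p} (\<lambda>t. f t * k (t * w))
          - c * integral {w * fst p..w * snd p} (\<lambda>u. u powr - \<sigma> * k u)) \<longlongrightarrow>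
          w powr (1 - \<sigma>) * improper_integral_0_inf (\<lambda>t. f t * k (t * w)) - c * K) (at_right 0 \<times>\<^sub>F at_top)"
        by (intro tendsto_diff tendsto_mult_left Ex w SL)
      have "\<bar>(w powr (1 - \<sigma>) * improper_integral_0_inf (\<lambda>t. f t * k (t * w)) - c * K) - 0\<bar> \<le> \<eta>"
        using L_pass[OF PF_nonbot lim1 tendsto_const key] .
      then show ?case using \<eta> by (simp add: dist_real_def)
    qed
  qed
qed

lemma one_minus_cos_le: "1 - cos (a::real) \<le> a\<^sup>2 / 2"
proof -
  have "cos a = 1 - 2 * sin (a / 2) ^ 2" using cos_double_sin[of "a/2"] by simp
  moreover have "sin (a / 2) ^ 2 \<le> (a / 2) ^ 2"
    using abs_sin_x_le_abs_x[of "a/2"] by (metis abs_ge_zero power2_abs power_mono)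
  ultimately show ?thesis by (simp add: power_divide)
qed

lemma K_pos:
  fixes F \<psi> :: "real \<Rightarrow> real" and \<kappa> q K :: real
  assumes KL: "((\<lambda>p. integral {fst p..snd p} F) \<longlongrightarrow> K) (at_right 0 \<times>\<^sub>F at_top)"
    and eq: "\<And>a b. 0 < a \<Longrightarrow> a \<le> b \<Longrightarrow> integral {a..b} F = \<psi> b - \<psi> a + \<kappa> * integral {a..b} (\<lambda>u. u powr q * (1 - cos u))"
    and \<psi>0: "(\<psi> \<longlongrightarrow> 0) (at_right 0)" and \<psi>i: "(\<psi> \<longlongrightarrow> 0) at_top"
    and \<kappa>: "\<kappa> > 0" and q: "q \<le> 0"
  shows "K > 0"
proof -
  define c1 where "c1 = (pi / 2) * pi powr q"
  have c1: "c1 > 0" by (simp add: c1_def)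
  have ri: "(\<lambda>u. u powr q * (1 - cos u)) integrable_on {a..b}" if "0 < a" for a b
    using that by (intro integrable_continuous_real continuous_intros) auto
  have rn: "0 \<le> u powr q * (1 - cos u)" for u by simp
  have low: "integral {a..b} (\<lambda>u. u powr q * (1 - cos u)) \<ge> c1" if "0 < a" "a \<le> pi / 2" "pi \<le> b" for a b
  proof -
    have "integral {a..pi/2} (\<lambda>u. u powr q * (1 - cos u)) + integral {pi/2..b} (\<lambda>u. u powr q * (1 - cos u))
        = integral {a..b} (\<lambda>u. u powr q * (1 - cos u))"
      using that by (intro Henstock_Kurzweil_Integration.integral_combine ri) auto
    moreover have "integral {pi/2..pi} (\<lambda>u. u powr q * (1 - cos u)) + integral {pi..b} (\<lambda>u. u powr q * (1 - cos u))
        = integral {pi/2..b} (\<lambda>u. u powr q * (1 - cos u))"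
      using that by (intro Henstock_Kurzweil_Integration.integral_combine ri) auto
    moreover have "0 \<le> integral {a..pi/2} (\<lambda>u. u powr q * (1 - cos u))"
      using that by (intro integral_nonneg ri rn)
    moreover have "0 \<le> integral {pi..b} (\<lambda>u. u powr q * (1 - cos u))"
      by (intro integral_nonneg ri rn) auto
    moreover have "integral {pi/2..pi} (\<lambda>u. u powr q * (1 - cos u)) \<ge> integral {pi/2..pi} (\<lambda>u. pi powr q)"
    proof (rule integral_le)
      show "(\<lambda>u. pi powr q) integrable_on {pi / 2..pi}" by (intro integrable_continuous_real continuous_on_const)
      show "(\<lambda>u. u powr q * (1 - cos u)) integrable_on {pi / 2..pi}" by (intro ri) simp
      fix u assume u: "u \<in> {pi / 2..pi}"
      have "0 \<le> cos (u - pi)" using u by (intro cos_ge_zero) auto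
      then have "cos u \<le> 0" by simp
      then have "1 \<le> 1 - cos u" by simp
      moreover have "0 < u"
      proof -
        have "pi / 2 \<le> u" using u by simp
        moreover have "0 < pi / 2" by simp
        ultimately show ?thesis by linarith
      qed
      then have "pi powr q \<le> u powr q" using u q by (intro powr_mono2') auto
      ultimately show "pi powr q \<le> u powr q * (1 - cos u)"
        by (metis mult.right_neutral mult_mono powr_ge_zero zero_le_one order_trans)
    qed
    moreover have "integral {pi/2..pi} (\<lambda>u. pi powr q) = c1" by (simp add: c1_def)
    ultimately show ?thesis by linarith
  qed
  have ev: "eventually (\<lambda>p. \<psi> (snd p) - \<psi> (fst p) + \<kappa> * c1 \<le> integral {fst p..snd p} F) (at_right 0 \<times>\<^sub>F at_top)"
  proof (rule ev_PF[where d=1 and B=4])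
    fix a b :: real assume ab: "0 < a" "a < 1" "4 < b"
    have "pi \<le> b" using ab pi_less_4 by linarith
    moreover have "a \<le> pi / 2" using ab pi_gt3 by linarith
    ultimately have "c1 \<le> integral {a..b} (\<lambda>u. u powr q * (1 - cos u))" using low ab by auto
    then have "\<kappa> * c1 \<le> \<kappa> * integral {a..b} (\<lambda>u. u powr q * (1 - cos u))" using \<kappa> by simp
    then show "\<psi> (snd (a, b)) - \<psi> (fst (a, b)) + \<kappa> * c1 \<le> integral {fst (a, b)..snd (a, b)} F"
      using eq[of a b] ab by simp
  qed simp
  have "((\<lambda>p. \<psi> (snd p) - \<psi> (fst p) + \<kappa> * c1) \<longlongrightarrow> 0 - 0 + \<kappa> * c1) (at_right 0 \<times>\<^sub>F at_top)"
    by (intro tendsto_intros filterlim_compose[OF \<psi>i filterlim_snd_prod] filterlim_compose[OF \<psi>0 filterlim_fst_prod])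
  then have "\<kappa> * c1 \<le> K" using tendsto_le[OF PF_nonbot KL _ ev] by simp
  moreover have "\<kappa> * c1 > 0" using \<kappa> c1 by simp
  ultimately show ?thesis by linarith
qed

lemma powr_id1: "(a::real) > 0 \<Longrightarrow> a powr - s * a = a powr (1 - s)"
  using powr_1m[of a s] by (simp only: mult.commute)
lemma powr_id2: "(a::real) > 0 \<Longrightarrow> a powr (- s - 1) * a ^ 2 = a powr (1 - s)"
proof -
  assume a: "a > 0"
  have "a powr (1 - s) = a powr ((- s - 1) + 2)" by simp
  also have "\<dots> = a powr (- s - 1) * a powr 2" by (rule powr_add)
  also have "a powr 2 = a ^ 2" using a by (intro powr_numeral) simp
  finally show ?thesis by simp
qed

lemma int_lin:
  fixes F r :: "real \<Rightarrow> real"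
  assumes "((\<lambda>u. F u - k * r u) has_integral D) S" "r integrable_on S" "F integrable_on S"
  shows "integral S F = D + k * integral S r"
proof -
  have "integral S (\<lambda>u. F u - k * r u) = D" using assms(1) by (rule integral_unique)
  moreover have "integral S (\<lambda>u. F u - k * r u) = integral S F - integral S (\<lambda>u. k * r u)"
    using assms(2,3) by (intro integral_diff int_cmult)
  moreover have "integral S (\<lambda>u. k * r u) = k * integral S r" by simp
  ultimately show ?thesis by simp
qed

lemma K_exist:
  fixes g :: "real \<Rightarrow> real" and \<sigma> :: real
  assumes s: "0 < \<sigma>" "\<sigma> < 1"
    and gc: "continuous_on UNIV g" and g1: "\<And>x. \<bar>g x\<bar> \<le> 1"
    and gI: "\<And>c d. c \<le> d \<Longrightarrow> \<bar>integral {c..d} g\<bar> \<le> 2"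
  shows "((\<lambda>p. integral {fst p..snd p} (\<lambda>u. u powr - \<sigma> * g u)) \<longlongrightarrow> improper_integral_0_inf (\<lambda>u. u powr - \<sigma> * g u)) (at_right 0 \<times>\<^sub>F at_top)"
proof (rule L_exist[OF zero_less_one gc g1])
  show "\<bar>integral {c..d} g\<bar> \<le> 2 / 1" if "c \<le> d" for c d using gI[OF that] by simp
  show "continuous_on {0<..} (\<lambda>t. t powr - \<sigma>)" by (intro continuous_intros) auto
  show "y powr - \<sigma> \<le> x powr - \<sigma>" if "0 < x" "x \<le> y" for x y using that s by (intro powr_mono2') auto
  show "0 \<le> x powr - \<sigma>" for x by simp
  show "((\<lambda>t. t powr - \<sigma>) \<longlongrightarrow> 0) at_top" using s by (intro tendsto_neg_powr filterlim_ident) auto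
  have "\<forall>a a'. 0 < a \<longrightarrow> a \<le> a' \<longrightarrow> a' < 1 \<longrightarrow> integral {a..a'} (\<lambda>t. t powr - \<sigma>) \<le> 1 / (1 - \<sigma>) * a' powr (1 - \<sigma>)"
    using powr_int_le(2)[OF _ _ s] by simp
  moreover have "1 - \<sigma> > 0" using s by simp
  ultimately show "\<exists>d0>0. \<exists>C p. p > 0 \<and> (\<forall>a a'. 0 < a \<longrightarrow> a \<le> a' \<longrightarrow> a' < d0 \<longrightarrow> integral {a..a'} (\<lambda>t. t powr - \<sigma>) \<le> C * a' powr p)"
    using zero_less_one by blast
qed

lemma Ks_pos:
  fixes \<sigma> :: real
  assumes s: "0 < \<sigma>" "\<sigma> < 1"
    and KL: "((\<lambda>p. integral {fst p..snd p} (\<lambda>u. u powr - \<sigma> * sin u)) \<longlongrightarrow> K) (at_right 0 \<times>\<^sub>F at_top)"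
  shows "K > 0"
proof (rule K_pos[where \<psi>="\<lambda>u. u powr - \<sigma> * (1 - cos u)" and q="- \<sigma> - 1", OF KL _ _ _ s(1)])
  fix a b :: real assume ab: "0 < a" "a \<le> b"
  have "((\<lambda>u. u powr - \<sigma> * sin u - \<sigma> * (u powr (- \<sigma> - 1) * (1 - cos u))) has_integral
      (b powr - \<sigma> * (1 - cos b) - a powr - \<sigma> * (1 - cos a))) {a..b}"
  proof (rule FTC_real[OF ab(2)])
    fix u assume u: "u \<in> {a..b}"
    then have u0: "u > 0" using ab by auto
    show "((\<lambda>u. u powr - \<sigma> * (1 - cos u)) has_real_derivative
        u powr - \<sigma> * sin u - \<sigma> * (u powr (- \<sigma> - 1) * (1 - cos u))) (at u)"
    proof -
      have d1: "((\<lambda>u. u powr - \<sigma>) has_real_derivative (- \<sigma>) * u powr (- \<sigma> - 1)) (at u)"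
        by (rule has_real_derivative_powr[OF u0])
      have d2: "((\<lambda>u. 1 - cos u) has_real_derivative sin u) (at u)"
        by (auto intro!: derivative_eq_intros)
      have "(- \<sigma>) * u powr (- \<sigma> - 1) * (1 - cos u) + sin u * u powr - \<sigma> =
          u powr - \<sigma> * sin u - \<sigma> * (u powr (- \<sigma> - 1) * (1 - cos u))"
        by (simp add: algebra_simps)
      then show ?thesis by (rule DERIV_cong[OF DERIV_mult[OF d1 d2]])
    qed
  qed
  moreover have ri: "(\<lambda>u. u powr (- \<sigma> - 1) * (1 - cos u)) integrable_on {a..b}"
    using ab by (intro integrable_continuous_real continuous_intros) auto
  moreover have "(\<lambda>u. u powr - \<sigma> * sin u) integrable_on {a..b}"
    using ab by (intro integrable_continuous_real continuous_intros) auto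
  ultimately show "integral {a..b} (\<lambda>u. u powr - \<sigma> * sin u) = b powr - \<sigma> * (1 - cos b) - a powr - \<sigma> * (1 - cos a)
      + \<sigma> * integral {a..b} (\<lambda>u. u powr (- \<sigma> - 1) * (1 - cos u))"
    by (rule int_lin)
next
  show "((\<lambda>u. u powr - \<sigma> * (1 - cos u)) \<longlongrightarrow> 0) (at_right 0)"
  proof (rule Lim_null_comparison)
    show "((\<lambda>u. 1 / 2 * u powr (1 - \<sigma>)) \<longlongrightarrow> 0) (at_right 0)"
      using s by (intro powr_tends0) auto
    show "eventually (\<lambda>u. norm (u powr - \<sigma> * (1 - cos u)) \<le> 1 / 2 * u powr (1 - \<sigma>)) (at_right 0)"
      unfolding eventually_at_right_field
    proof (intro exI[of _ 1] conjI allI impI)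
      fix u :: real assume u: "0 < u" "u < 1"
      have "1 - cos u \<le> u\<^sup>2 / 2" by (rule one_minus_cos_le)
      also have "\<dots> \<le> u / 2" using u by (simp add: power2_eq_square mult_left_le)
      finally have "u powr - \<sigma> * (1 - cos u) \<le> u powr - \<sigma> * (u / 2)" by (intro mult_left_mono) auto
      also have "\<dots> = 1 / 2 * u powr (1 - \<sigma>)" using powr_id1[OF u(1), of \<sigma>] by simp
      finally show "norm (u powr - \<sigma> * (1 - cos u)) \<le> 1 / 2 * u powr (1 - \<sigma>)" by simp
    qed simp
  qed
  show "((\<lambda>u. u powr - \<sigma> * (1 - cos u)) \<longlongrightarrow> 0) at_top"
  proof (rule Lim_null_comparison)
    show "((\<lambda>u. 2 * u powr - \<sigma>) \<longlongrightarrow> 0) at_top"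
    proof -
      have "((\<lambda>u::real. u powr - \<sigma>) \<longlongrightarrow> 0) at_top" using s by (intro tendsto_neg_powr filterlim_ident) auto
      from tendsto_mult_left[OF this, of 2] show ?thesis by simp
    qed
    show "eventually (\<lambda>u. norm (u powr - \<sigma> * (1 - cos u)) \<le> 2 * u powr - \<sigma>) at_top"
    proof (rule always_eventually, intro allI)
      fix u :: real
      have "1 - cos u \<le> 2" using cos_ge_minus_one[of u] by linarith
      then have "u powr - \<sigma> * (1 - cos u) \<le> u powr - \<sigma> * 2" by (intro mult_left_mono) auto
      moreover have "0 \<le> u powr - \<sigma> * (1 - cos u)" by simp
      ultimately show "norm (u powr - \<sigma> * (1 - cos u)) \<le> 2 * u powr - \<sigma>"
        by simp
    qed
  qed
qed (use s in auto)

lemma Kc_pos: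
  fixes \<sigma> :: real
  assumes s: "0 < \<sigma>" "\<sigma> < 1"
    and KL: "((\<lambda>p. integral {fst p..snd p} (\<lambda>u. u powr - \<sigma> * cos u)) \<longlongrightarrow> K) (at_right 0 \<times>\<^sub>F at_top)"
  shows "K > 0"
proof (rule K_pos[where \<psi>="\<lambda>u. u powr - \<sigma> * sin u + \<sigma> * (u powr (- \<sigma> - 1) * (1 - cos u))"
      and q="- \<sigma> - 2" and \<kappa>="\<sigma> * (\<sigma> + 1)", OF KL])
  fix a b :: real assume ab: "0 < a" "a \<le> b"
  have "((\<lambda>u. u powr - \<sigma> * cos u - \<sigma> * (\<sigma> + 1) * (u powr (- \<sigma> - 2) * (1 - cos u))) has_integral
      ((b powr - \<sigma> * sin b + \<sigma> * (b powr (- \<sigma> - 1) * (1 - cos b))) -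
       (a powr - \<sigma> * sin a + \<sigma> * (a powr (- \<sigma> - 1) * (1 - cos a))))) {a..b}"
  proof (rule FTC_real[OF ab(2)])
    fix u assume u: "u \<in> {a..b}"
    then have u0: "u > 0" using ab by auto
    have d1: "((\<lambda>u. u powr - \<sigma>) has_real_derivative (- \<sigma>) * u powr (- \<sigma> - 1)) (at u)"
      by (rule has_real_derivative_powr[OF u0])
    have e: "- \<sigma> - 1 - 1 = - \<sigma> - 2" by simp
    have d2: "((\<lambda>u. u powr (- \<sigma> - 1)) has_real_derivative (- \<sigma> - 1) * u powr (- \<sigma> - 2)) (at u)"
      using has_real_derivative_powr[OF u0, of "- \<sigma> - 1"] unfolding e .
    have ds: "(sin has_real_derivative cos u) (at u)" by (rule DERIV_sin)
    have dc: "((\<lambda>u. 1 - cos u) has_real_derivative sin u) (at u)"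
      by (auto intro!: derivative_eq_intros)
    have D: "((\<lambda>u. u powr - \<sigma> * sin u + \<sigma> * (u powr (- \<sigma> - 1) * (1 - cos u))) has_real_derivative
        ((- \<sigma>) * u powr (- \<sigma> - 1) * sin u + cos u * u powr - \<sigma>) +
        \<sigma> * ((- \<sigma> - 1) * u powr (- \<sigma> - 2) * (1 - cos u) + sin u * u powr (- \<sigma> - 1))) (at u)"
      by (intro DERIV_add DERIV_cmult DERIV_mult d1 d2 ds dc)
    have "((- \<sigma>) * u powr (- \<sigma> - 1) * sin u + cos u * u powr - \<sigma>) +
        \<sigma> * ((- \<sigma> - 1) * u powr (- \<sigma> - 2) * (1 - cos u) + sin u * u powr (- \<sigma> - 1)) =
        u powr - \<sigma> * cos u - \<sigma> * (\<sigma> + 1) * (u powr (- \<sigma> - 2) * (1 - cos u))"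
      by (simp add: algebra_simps)
    then show "((\<lambda>u. u powr - \<sigma> * sin u + \<sigma> * (u powr (- \<sigma> - 1) * (1 - cos u))) has_real_derivative
        u powr - \<sigma> * cos u - \<sigma> * (\<sigma> + 1) * (u powr (- \<sigma> - 2) * (1 - cos u))) (at u)"
      by (rule DERIV_cong[OF D])
  qed
  moreover have "(\<lambda>u. u powr (- \<sigma> - 2) * (1 - cos u)) integrable_on {a..b}"
    using ab by (intro integrable_continuous_real continuous_intros) auto
  moreover have "(\<lambda>u. u powr - \<sigma> * cos u) integrable_on {a..b}"
    using ab by (intro integrable_continuous_real continuous_intros) auto
  ultimately show "integral {a..b} (\<lambda>u. u powr - \<sigma> * cos u) =
      (b powr - \<sigma> * sin b + \<sigma> * (b powr (- \<sigma> - 1) * (1 - cos b))) -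
      (a powr - \<sigma> * sin a + \<sigma> * (a powr (- \<sigma> - 1) * (1 - cos a)))
      + \<sigma> * (\<sigma> + 1) * integral {a..b} (\<lambda>u. u powr (- \<sigma> - 2) * (1 - cos u))"
    by (rule int_lin)
next
  show "((\<lambda>u. u powr - \<sigma> * sin u + \<sigma> * (u powr (- \<sigma> - 1) * (1 - cos u))) \<longlongrightarrow> 0) (at_right 0)"
  proof (rule Lim_null_comparison)
    show "((\<lambda>u. 2 * u powr (1 - \<sigma>)) \<longlongrightarrow> 0) (at_right 0)"
      using s by (intro powr_tends0) auto
    show "eventually (\<lambda>u. norm (u powr - \<sigma> * sin u + \<sigma> * (u powr (- \<sigma> - 1) * (1 - cos u))) \<le> 2 * u powr (1 - \<sigma>)) (at_right 0)"
      unfolding eventually_at_right_field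
    proof (intro exI[of _ 1] conjI allI impI)
      fix u :: real assume u: "0 < u" "u < 1"
      have "\<bar>u powr - \<sigma> * sin u\<bar> \<le> u powr - \<sigma> * u"
        using abs_sin_x_le_abs_x[of u] u by (simp add: abs_mult mult_left_mono)
      also have "\<dots> = u powr (1 - \<sigma>)" by (rule powr_id1[OF u(1)])
      finally have A: "\<bar>u powr - \<sigma> * sin u\<bar> \<le> u powr (1 - \<sigma>)" .
      have "u powr (- \<sigma> - 1) * (1 - cos u) \<le> u powr (- \<sigma> - 1) * (u\<^sup>2 / 2)"
        using one_minus_cos_le[of u] by (intro mult_left_mono) auto
      also have "\<dots> = u powr (1 - \<sigma>) / 2" using powr_id2[OF u(1), of \<sigma>] by simp
      finally have "\<sigma> * (u powr (- \<sigma> - 1) * (1 - cos u)) \<le> \<sigma> * (u powr (1 - \<sigma>) / 2)"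
        using s by (intro mult_left_mono) auto
      also have "\<dots> \<le> u powr (1 - \<sigma>)"
      proof -
        have "\<sigma> * u powr (1 - \<sigma>) \<le> 1 * u powr (1 - \<sigma>)" using s by (intro mult_right_mono) auto
        moreover have "0 \<le> u powr (1 - \<sigma>)" by simp
        moreover have "\<sigma> * (u powr (1 - \<sigma>) / 2) = (\<sigma> * u powr (1 - \<sigma>)) / 2" by simp
        ultimately show ?thesis by linarith
      qed
      finally have B: "\<sigma> * (u powr (- \<sigma> - 1) * (1 - cos u)) \<le> u powr (1 - \<sigma>)" .
      have B0: "0 \<le> \<sigma> * (u powr (- \<sigma> - 1) * (1 - cos u))" using s by simp
      show "norm (u powr - \<sigma> * sin u + \<sigma> * (u powr (- \<sigma> - 1) * (1 - cos u))) \<le> 2 * u powr (1 - \<sigma>)"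
        using A B B0 by simp
    qed simp
  qed
  show "((\<lambda>u. u powr - \<sigma> * sin u + \<sigma> * (u powr (- \<sigma> - 1) * (1 - cos u))) \<longlongrightarrow> 0) at_top"
  proof (rule Lim_null_comparison)
    show "((\<lambda>u. 3 * u powr - \<sigma>) \<longlongrightarrow> 0) at_top"
    proof -
      have "((\<lambda>u::real. u powr - \<sigma>) \<longlongrightarrow> 0) at_top" using s by (intro tendsto_neg_powr filterlim_ident) auto
      from tendsto_mult_left[OF this, of 3] show ?thesis by simp
    qed
    show "eventually (\<lambda>u. norm (u powr - \<sigma> * sin u + \<sigma> * (u powr (- \<sigma> - 1) * (1 - cos u))) \<le> 3 * u powr - \<sigma>) at_top"
      using eventually_ge_at_top[of 1]
    proof eventually_elim
      case (elim u)
      have A: "\<bar>u powr - \<sigma> * sin u\<bar> \<le> u powr - \<sigma>"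
        using abs_sin_le_one[of u] by (simp add: abs_mult mult_left_le)
      have "u powr (- \<sigma> - 1) \<le> u powr - \<sigma>" using elim by (intro powr_mono) auto
      moreover have "1 - cos u \<le> 2" "0 \<le> 1 - cos u" using cos_ge_minus_one[of u] by auto
      ultimately have C: "u powr (- \<sigma> - 1) * (1 - cos u) \<le> u powr - \<sigma> * 2"
        by (intro mult_mono) auto
      have "\<sigma> * (u powr (- \<sigma> - 1) * (1 - cos u)) \<le> 1 * (u powr - \<sigma> * 2)"
        by (rule mult_mono) (use s C \<open>0 \<le> 1 - cos u\<close> in auto)
      moreover have "0 \<le> \<sigma> * (u powr (- \<sigma> - 1) * (1 - cos u))" using s \<open>0 \<le> 1 - cos u\<close> by simp
      ultimately show ?case using A by simp
    qed
  qed
qed (use s in auto)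

lemma osc1_cos: "\<bar>integral {c..d} cos\<bar> \<le> 2" if "c \<le> d" for c d :: real
  using osc_cos(3)[of 1 c d] that by simp
lemma osc1_sin: "\<bar>integral {c..d} sin\<bar> \<le> 2" if "c \<le> d" for c d :: real
  using osc_sin(3)[of 1 c d] that by simp

theorem proposition3p3:
  fixes f f' f'' :: "real \<Rightarrow> real"
  assumes lim_inf: "(f \<longlongrightarrow> 0) at_top"
    and ev_decr: "\<exists>T. \<forall>s t. T \<le> s \<longrightarrow> s \<le> t \<longrightarrow> f t \<le> f s"
    and d1: "\<And>t. t > 0 \<Longrightarrow> (f has_real_derivative f' t) (at t)"
    and d2: "\<And>t. t > 0 \<Longrightarrow> (f' has_real_derivative f'' t) (at t)"
    and c2: "continuous_on {0<..} f''"
    and cvx: "convex_on {0<..} f"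
    and mono2: "\<exists>\<epsilon>>0. mono_on {0<..<\<epsilon>} f'' \<or> antimono_on {0<..<\<epsilon>} f''"
  shows
    "(\<forall>\<sigma>1. (f \<longlongrightarrow> f 0) (at_right 0) \<and> 0 < \<sigma>1 \<and> \<sigma>1 < 1 \<and>
          ((\<lambda>t. t powr \<sigma>1 * f' t) \<longlongrightarrow> 0) (at_right 0) \<longrightarrow>
        ((\<lambda>\<omega>. \<omega> powr (2 - \<sigma>1) * Fcos f \<omega>) \<longlongrightarrow> 0) at_top \<and>
        ((\<lambda>\<omega>. \<omega> * Fsin f \<omega>) \<longlongrightarrow> f 0) at_top)
   \<and>
    (\<forall>\<sigma>2. filterlim f at_top (at_right 0) \<and> 0 < \<sigma>2 \<and> \<sigma>2 < 1 \<and>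
          (\<exists>c>0. ((\<lambda>t. t powr \<sigma>2 * f t) \<longlongrightarrow> c) (at_right 0)) \<longrightarrow>
        (\<exists>L>0. ((\<lambda>\<omega>. \<omega> powr (1 - \<sigma>2) * Fcos f \<omega>) \<longlongrightarrow> L) at_top) \<and>
        (\<exists>L>0. ((\<lambda>\<omega>. \<omega> powr (1 - \<sigma>2) * Fsin f \<omega>) \<longlongrightarrow> L) at_top))"
proof -
  note FF = f_facts[OF lim_inf d1 cvx]
  have contf: "continuous_on {0<..} f" by (rule contf_on[OF d1])
  have contf': "continuous_on {0<..} f'" by (rule contf_on[OF d2])
  show ?thesis
  proof (intro conjI allI impI)
    fix \<sigma> :: real
    assume H: "(f \<longlongrightarrow> f 0) (at_right 0) \<and> 0 < \<sigma> \<and> \<sigma> < 1 \<and> ((\<lambda>t. t powr \<sigma> * f' t) \<longlongrightarrow> 0) (at_right 0)"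
    show "((\<lambda>\<omega>. \<omega> powr (2 - \<sigma>) * Fcos f \<omega>) \<longlongrightarrow> 0) at_top"
      using H by (intro partA1[OF lim_inf d1 contf' FF]) auto
    show "((\<lambda>\<omega>. \<omega> * Fsin f \<omega>) \<longlongrightarrow> f 0) at_top"
      using H by (intro partA2[OF lim_inf d1 contf' FF]) auto
  next
    fix \<sigma> :: real
    assume H: "filterlim f at_top (at_right 0) \<and> 0 < \<sigma> \<and> \<sigma> < 1 \<and>
          (\<exists>c>0. ((\<lambda>t. t powr \<sigma> * f t) \<longlongrightarrow> c) (at_right 0))"
    then have s: "0 < \<sigma>" "\<sigma> < 1" by auto
    from H obtain c where c: "c > 0" "((\<lambda>t. t powr \<sigma> * f t) \<longlongrightarrow> c) (at_right 0)" by auto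
    have KLc: "((\<lambda>p. integral {fst p..snd p} (\<lambda>u. u powr - \<sigma> * cos u)) \<longlongrightarrow> improper_integral_0_inf (\<lambda>u. u powr - \<sigma> * cos u)) (at_right 0 \<times>\<^sub>F at_top)"
      by (rule K_exist[OF s _ _ osc1_cos]) (auto intro: continuous_intros)
    have KLs: "((\<lambda>p. integral {fst p..snd p} (\<lambda>u. u powr - \<sigma> * sin u)) \<longlongrightarrow> improper_integral_0_inf (\<lambda>u. u powr - \<sigma> * sin u)) (at_right 0 \<times>\<^sub>F at_top)"
      by (rule K_exist[OF s _ _ osc1_sin]) (auto intro: continuous_intros)
    have "((\<lambda>w. w powr (1 - \<sigma>) * improper_integral_0_inf (\<lambda>t. f t * cos (t * w))) \<longlongrightarrow>
        c * improper_integral_0_inf (\<lambda>u. u powr - \<sigma> * cos u)) at_top"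
      by (rule B_gen[OF lim_inf contf FF(3,4) s c(1) c(2) _ _ _ KLc])
        (auto intro: continuous_intros osc_cos(3))
    moreover have "c * improper_integral_0_inf (\<lambda>u. u powr - \<sigma> * cos u) > 0"
      using Kc_pos[OF s KLc] c by simp
    ultimately show "\<exists>L>0. ((\<lambda>\<omega>. \<omega> powr (1 - \<sigma>) * Fcos f \<omega>) \<longlongrightarrow> L) at_top"
      unfolding Fcos_def by blast
    have "((\<lambda>w. w powr (1 - \<sigma>) * improper_integral_0_inf (\<lambda>t. f t * sin (t * w))) \<longlongrightarrow>
        c * improper_integral_0_inf (\<lambda>u. u powr - \<sigma> * sin u)) at_top"
      by (rule B_gen[OF lim_inf contf FF(3,4) s c(1) c(2) _ _ _ KLs])
        (auto intro: continuous_intros osc_sin(3))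
    moreover have "c * improper_integral_0_inf (\<lambda>u. u powr - \<sigma> * sin u) > 0"
      using Ks_pos[OF s KLs] c by simp
    ultimately show "\<exists>L>0. ((\<lambda>\<omega>. \<omega> powr (1 - \<sigma>) * Fsin f \<omega>) \<longlongrightarrow> L) at_top"
      unfolding Fsin_def by blast
  qed
qed

end
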